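(* Let $n\ge1$. (i) For $I,J\subseteq\{1,\dots,n-1\}$, the number $\widehat a_{n,I,J}$ of simple $n$-braids $x$ with $D_L(x)\supseteq I$ and $D_R(x)\supseteq J$ depends only on the $n$-partitions $\{I\}_n$ and $\{J\}_n$. (ii) For each fixed $I\subseteq\{1,\dots,n-1\}$, the number $a_{n,I,J}$ of simple $n$-braids $x$ with $D_L(x)=I$ and $D_R(x)\supseteq J$ depends (as $J$ varies over subsets of $\{1,\dots,n-1\}$) only on the $n$-partition $\{J\}_n$.
   Context: $B_n^+$ is the positive braid monoid with generators $\sigma_1,\dots,\sigma_{n-1}$ and relations $\sigma_i\sigma_j=\sigma_j\sigma_i$ ($|i-j|\ge2$), $\sigma_i\sigma_j\sigma_i=\sigma_j\sigma_i\sigma_j$ ($|i-j|=1$). $\Delta_1=1$, $\Delta_n=\sigma_1\cdots\sigma_{n-1}\Delta_{n-1}$. Simple $n$-braids are the left (equivalently right) divisors of $\Delta_n$ in $B_n^+$. For simple $x$, $D_L(x)$ (resp. $D_R(x)$) is the set of $i\in\{1,\dots,n-1\}$ with $\sigma_i$ a left (resp. right) divisor of $x$. For $I\subseteq\{1,\dots,n-1\}$, if $p_1<\dots<p_k$ is the increasing enumeration of $\{1,\dots,n\}\setminus I$, the $n$-composition of $I$ is $(p_1,p_2-p_1,\dots,p_k-p_{k-1})$ and the $n$-partition $\{I\}_n$ is the non-increasing rearrangement of the $n$-composition. *)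

theory Defs
  imports Main
begin

text \<open>Positive braid monoid B_n^+ : words over the generators 1..n-1 (generator i
stands for sigma_i) modulo the congruence generated by the braid relations.\<close>

definition gens :: "nat \<Rightarrow> nat set" where
  "gens n = {1..n-1}"

inductive braid_step :: "nat \<Rightarrow> nat list \<Rightarrow> nat list \<Rightarrow> bool" for n where
  comm: "\<lbrakk>i \<in> gens n; j \<in> gens n; i \<ge> j + 2 \<or> j \<ge> i + 2\<rbrakk>
         \<Longrightarrow> braid_step n (u @ [i, j] @ v) (u @ [j, i] @ v)"
| braid: "\<lbrakk>i \<in> gens n; j \<in> gens n; i = j + 1 \<or> j = i + 1\<rbrakk>
         \<Longrightarrow> braid_step n (u @ [i, j, i] @ v) (u @ [j, i, j] @ v)"

definition braid_eq :: "nat \<Rightarrow> nat list \<Rightarrow> nat list \<Rightarrow> bool" where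
  "braid_eq n = (\<lambda>u v. braid_step n u v \<or> braid_step n v u)\<^sup>*\<^sup>*"

definition words :: "nat \<Rightarrow> nat list set" where
  "words n = {w. set w \<subseteq> gens n}"

definition braid_class :: "nat \<Rightarrow> nat list \<Rightarrow> nat list set" where
  "braid_class n w = {v \<in> words n. braid_eq n w v}"

fun Delta :: "nat \<Rightarrow> nat list" where
  "Delta 0 = []"
| "Delta (Suc m) = [1..<Suc m] @ Delta m"

definition left_div :: "nat \<Rightarrow> nat list \<Rightarrow> nat list \<Rightarrow> bool" where
  "left_div n u w \<longleftrightarrow> (\<exists>v \<in> words n. braid_eq n (u @ v) w)"

definition right_div :: "nat \<Rightarrow> nat list \<Rightarrow> nat list \<Rightarrow> bool" where
  "right_div n u w \<longleftrightarrow> (\<exists>v \<in> words n. braid_eq n (v @ u) w)"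

definition simple_words :: "nat \<Rightarrow> nat list set" where
  "simple_words n = {w \<in> words n. left_div n w (Delta n)}"

definition DL :: "nat \<Rightarrow> nat list \<Rightarrow> nat set" where
  "DL n w = {i \<in> gens n. left_div n [i] w}"

definition DR :: "nat \<Rightarrow> nat list \<Rightarrow> nat set" where
  "DR n w = {i \<in> gens n. right_div n [i] w}"

definition ahat :: "nat \<Rightarrow> nat set \<Rightarrow> nat set \<Rightarrow> nat" where
  "ahat n I J = card (braid_class n ` {w \<in> simple_words n. I \<subseteq> DL n w \<and> J \<subseteq> DR n w})"

definition a_count :: "nat \<Rightarrow> nat set \<Rightarrow> nat set \<Rightarrow> nat" where
  "a_count n I J = card (braid_class n ` {w \<in> simple_words n. DL n w = I \<and> J \<subseteq> DR n w})"

definition ncomp :: "nat \<Rightarrow> nat set \<Rightarrow> nat list" where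
  "ncomp n I = (let ps = sorted_list_of_set ({1..n} - I)
                in hd ps # map (\<lambda>(a, b). b - a) (zip ps (tl ps)))"

definition npart :: "nat \<Rightarrow> nat set \<Rightarrow> nat list" where
  "npart n I = rev (sort (ncomp n I))"

end

theory Submission
  imports Defs "HOL-Combinatorics.Permutations" "HOL-Library.Multiset"
begin

definition sw :: "nat \<Rightarrow> nat \<Rightarrow> nat" where
  "sw i x = (if x = i then Suc i else if x = Suc i then i else x)"

primrec pw :: "nat list \<Rightarrow> nat \<Rightarrow> nat" where
  "pw [] = id"
| "pw (i # w) = sw i \<circ> pw w"

lemma pw_append[simp]: "pw (u @ v) = pw u \<circ> pw v"
  by (induction u) (auto simp: comp_assoc)

lemma sw_sw[simp]: "sw i (sw i x) = x"
  by (auto simp: sw_def)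

lemma sw_o_sw[simp]: "sw i \<circ> sw i = id"
  by (auto simp: fun_eq_iff)

lemma sw_comm_pt: "i \<ge> j + 2 \<or> j \<ge> i + 2 \<Longrightarrow> sw i (sw j x) = sw j (sw i x)"
  by (auto simp: sw_def)

lemma sw_comm: "i \<ge> j + 2 \<or> j \<ge> i + 2 \<Longrightarrow> sw i \<circ> sw j = sw j \<circ> sw i"
  by (auto simp: fun_eq_iff sw_comm_pt)

lemma sw_braid: "i = j + 1 \<or> j = i + 1 \<Longrightarrow> sw i \<circ> sw j \<circ> sw i = sw j \<circ> sw i \<circ> sw j"
  by (auto simp: fun_eq_iff sw_def)

lemma sw_transpose: "sw i = Transposition.transpose i (Suc i)"
  by (auto simp: fun_eq_iff sw_def Transposition.transpose_def)

definition Sn :: "nat \<Rightarrow> (nat \<Rightarrow> nat) set" where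
  "Sn n = {f. f permutes {1..n}}"

lemma sw_Sn: "i \<in> gens n \<Longrightarrow> sw i \<in> Sn n"
  unfolding Sn_def sw_transpose gens_def mem_Collect_eq by (rule permutes_swap_id) auto

lemma pw_Sn: "w \<in> words n \<Longrightarrow> pw w \<in> Sn n"
proof (induction w)
  case Nil then show ?case by (auto simp: Sn_def permutes_def)
next
  case (Cons a w)
  then have "a \<in> gens n" "w \<in> words n" by (auto simp: words_def)
  then show ?case using Cons sw_Sn[of a n] permutes_compose[of "pw w" "{1..n}" "sw a"] by (simp add: Sn_def comp_def)
qed

lemma braid_step_pw: "braid_step n a b \<Longrightarrow> pw a = pw b \<and> length a = length b \<and> set a = set b"
proof (induction rule: braid_step.induct)
  case (comm i j u v)
  have e: "sw i (sw j x) = sw j (sw i x)" for x by (rule sw_comm_pt) (use comm in auto)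
  have "pw ([i, j] @ v) = pw ([j, i] @ v)" by (simp add: fun_eq_iff e)
  then show ?case by auto
next
  case (braid i j u v)
  have e: "sw i (sw j (sw i x)) = sw j (sw i (sw j x))" for x
    using sw_braid[of i j] braid(3) by (simp add: fun_eq_iff)
  have "pw ([i, j, i] @ v) = pw ([j, i, j] @ v)" by (simp add: fun_eq_iff e)
  then show ?case by auto
qed

lemma braid_eq_pw: "braid_eq n a b \<Longrightarrow> pw a = pw b \<and> length a = length b \<and> set a = set b"
  unfolding braid_eq_def
proof (induction rule: rtranclp_induct)
  case base then show ?case by simp
next
  case (step y z)
  then show ?case using braid_step_pw[of n y z] braid_step_pw[of n z y] by metis
qed

lemma braid_eq_refl[simp]: "braid_eq n a a"
  by (simp add: braid_eq_def)

lemma braid_eq_sym: "braid_eq n a b \<Longrightarrow> braid_eq n b a"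
proof -
  have "symp (\<lambda>u v. braid_step n u v \<or> braid_step n v u)" by (auto simp: symp_def)
  then show "braid_eq n a b \<Longrightarrow> braid_eq n b a" unfolding braid_eq_def
    by (rule sympD[OF symp_rtranclp])
qed

lemma braid_eq_trans: "braid_eq n a b \<Longrightarrow> braid_eq n b c \<Longrightarrow> braid_eq n a c"
  unfolding braid_eq_def by (rule rtranclp_trans)

lemma rtranclp_hom:
  assumes "\<And>a b. R a b \<Longrightarrow> R (h a) (h b)" "R\<^sup>*\<^sup>* a b"
  shows "R\<^sup>*\<^sup>* (h a) (h b)"
  using assms(2)
proof (induction rule: rtranclp_induct)
  case base then show ?case by simp
next
  case (step y z)
  show ?case by (rule rtranclp.rtrancl_into_rtrancl[OF step.IH assms(1)[OF step.hyps(2)]])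
qed

lemma braid_step_app: "braid_step n a b \<Longrightarrow> braid_step n (c @ a @ d) (c @ b @ d)"
proof (induction rule: braid_step.induct)
  case (comm i j u v)
  then show ?case using braid_step.comm[of i n j "c @ u" "v @ d"] by simp
next
  case (braid i j u v)
  then show ?case using braid_step.braid[of i n j "c @ u" "v @ d"] by simp
qed

lemma braid_eq_app: "braid_eq n a b \<Longrightarrow> braid_eq n (c @ a @ d) (c @ b @ d)"
  unfolding braid_eq_def
  by (rule rtranclp_hom[where h = "\<lambda>x. c @ x @ d"]) (auto intro: braid_step_app)

lemma braid_eq_app_r: "braid_eq n a b \<Longrightarrow> braid_eq n (a @ d) (b @ d)"
  using braid_eq_app[of n a b "[]" d] by simp

lemma braid_step_rev: "braid_step n a b \<Longrightarrow> braid_step n (rev a) (rev b) \<or> braid_step n (rev b) (rev a)"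
proof (induction rule: braid_step.induct)
  case (comm i j u v)
  then show ?case using braid_step.comm[of j n i "rev v" "rev u"] by auto
next
  case (braid i j u v)
  then show ?case using braid_step.braid[of i n j "rev v" "rev u"] by simp
qed

lemma braid_eq_rev: "braid_eq n a b \<Longrightarrow> braid_eq n (rev a) (rev b)"
  unfolding braid_eq_def
  by (rule rtranclp_hom[where h = rev]) (auto dest: braid_step_rev)


definition Inv :: "nat \<Rightarrow> (nat \<Rightarrow> nat) \<Rightarrow> (nat \<times> nat) set" where
  "Inv n f = {(p, q). p \<in> {1..n} \<and> q \<in> {1..n} \<and> p < q \<and> f q < f p}"

definition ninv :: "nat \<Rightarrow> (nat \<Rightarrow> nat) \<Rightarrow> nat" where
  "ninv n f = card (Inv n f)"

lemma Inv_sub: "Inv n f \<subseteq> {1..n} \<times> {1..n}"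
  by (auto simp: Inv_def)

lemma finite_Inv[simp]: "finite (Inv n f)"
  by (rule finite_subset[OF Inv_sub]) auto

lemma sw_inj_iff[simp]: "sw i x = sw i y \<longleftrightarrow> x = y"
  by (metis sw_sw)

lemma sw_range: "1 \<le> i \<Longrightarrow> Suc i \<le> n \<Longrightarrow> x \<in> {1..n} \<Longrightarrow> sw i x \<in> {1..n}"
  by (auto simp: sw_def)

lemma sw_mono: "p < q \<Longrightarrow> (p, q) \<noteq> (i, Suc i) \<Longrightarrow> sw i p < sw i q"
  unfolding sw_def by auto

lemma Inv_sw_img:
  assumes "1 \<le> i" "Suc i \<le> n"
  shows "(\<lambda>(p, q). (sw i p, sw i q)) ` (Inv n f - {(i, Suc i)}) \<subseteq> Inv n (f \<circ> sw i) - {(i, Suc i)}"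
proof
  fix x assume "x \<in> (\<lambda>(p, q). (sw i p, sw i q)) ` (Inv n f - {(i, Suc i)})"
  then obtain p q where x: "x = (sw i p, sw i q)" and pq: "(p, q) \<in> Inv n f" "(p, q) \<noteq> (i, Suc i)"
    by auto
  have r: "sw i p \<in> {1..n}" "sw i q \<in> {1..n}" using pq sw_range[OF assms] by (auto simp: Inv_def)
  have m: "sw i p < sw i q" using pq sw_mono[of p q i] by (auto simp: Inv_def)
  have ne: "(sw i p, sw i q) \<noteq> (i, Suc i)"
  proof
    assume "(sw i p, sw i q) = (i, Suc i)"
    then have "p = Suc i" "q = i" using sw_sw[of i p] sw_sw[of i q] by (auto simp: sw_def)
    then show False using pq by (auto simp: Inv_def)
  qed
  show "x \<in> Inv n (f \<circ> sw i) - {(i, Suc i)}"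
    using x r m ne pq by (auto simp: Inv_def)
qed

lemma inj_sw2: "inj_on (\<lambda>(p, q). (sw i p, sw i q)) A"
  by (auto simp: inj_on_def)

lemma card_Inv_minus:
  assumes "1 \<le> i" "Suc i \<le> n"
  shows "card (Inv n f - {(i, Suc i)}) = card (Inv n (f \<circ> sw i) - {(i, Suc i)})"
proof (rule antisym)
  show "card (Inv n f - {(i, Suc i)}) \<le> card (Inv n (f \<circ> sw i) - {(i, Suc i)})"
    by (rule card_inj_on_le[OF inj_sw2 Inv_sw_img[OF assms]]) simp
  have "f \<circ> sw i \<circ> sw i = f" by (simp add: comp_assoc)
  then show "card (Inv n (f \<circ> sw i) - {(i, Suc i)}) \<le> card (Inv n f - {(i, Suc i)})"
    using card_inj_on_le[OF inj_sw2 Inv_sw_img[OF assms, of "f \<circ> sw i"]] by simp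
qed

lemma card_split_pt: "finite A \<Longrightarrow> card A = card (A - {x}) + (if x \<in> A then 1 else 0)"
proof (cases "x \<in> A")
  case True
  assume "finite A"
  with card_Suc_Diff1[OF this True] True show ?thesis by simp
qed simp

lemma ninv_asc:
  assumes "1 \<le> i" "Suc i \<le> n" "f i < f (Suc i)"
  shows "ninv n (f \<circ> sw i) = ninv n f + 1"
proof -
  have a: "(i, Suc i) \<in> Inv n (f \<circ> sw i)" using assms by (auto simp: Inv_def sw_def)
  have b: "(i, Suc i) \<notin> Inv n f" using assms by (auto simp: Inv_def)
  show ?thesis unfolding ninv_def
    using card_split_pt[of "Inv n f" "(i, Suc i)"] card_split_pt[of "Inv n (f \<circ> sw i)" "(i, Suc i)"]
      card_Inv_minus[OF assms(1,2), of f] a b by simp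
qed

lemma ninv_desc:
  assumes "1 \<le> i" "Suc i \<le> n" "f (Suc i) < f i"
  shows "ninv n f = ninv n (f \<circ> sw i) + 1"
proof -
  have "ninv n (f \<circ> sw i \<circ> sw i) = ninv n (f \<circ> sw i) + 1"
    by (rule ninv_asc) (use assms in \<open>auto simp: sw_def\<close>)
  then show ?thesis by (simp add: comp_assoc)
qed

lemma ninv_sw_le:
  assumes "1 \<le> i" "Suc i \<le> n"
  shows "ninv n (f \<circ> sw i) \<le> ninv n f + 1"
  unfolding ninv_def
  using card_split_pt[of "Inv n f" "(i, Suc i)"] card_split_pt[of "Inv n (f \<circ> sw i)" "(i, Suc i)"]
      card_Inv_minus[OF assms(1,2), of f] by (simp split: if_splits)

lemma ninv_comp_pw_le: "w \<in> words n \<Longrightarrow> ninv n (f \<circ> pw w) \<le> ninv n f + length w"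
proof (induction w arbitrary: f)
  case Nil then show ?case by simp
next
  case (Cons a w)
  then have a: "1 \<le> a" "Suc a \<le> n" and w: "w \<in> words n" by (auto simp: words_def gens_def)
  have "f \<circ> pw (a # w) = (f \<circ> sw a) \<circ> pw w" by (simp add: comp_assoc)
  moreover have "ninv n ((f \<circ> sw a) \<circ> pw w) \<le> ninv n (f \<circ> sw a) + length w" by (rule Cons.IH[OF w])
  ultimately have "ninv n (f \<circ> pw (a # w)) \<le> ninv n (f \<circ> sw a) + length w" by simp
  also have "\<dots> \<le> ninv n f + 1 + length w" using ninv_sw_le[OF a] by simp
  finally show ?case by (simp add: o_def)
qed

lemma ninv_id[simp]: "ninv n id = 0"
proof -
  have "Inv n id = {}" by (auto simp: Inv_def)
  then show ?thesis by (simp add: ninv_def)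
qed

lemma ninv_pw_le: "w \<in> words n \<Longrightarrow> ninv n (pw w) \<le> length w"
  using ninv_comp_pw_le[of w n id] by simp

lemma ninv_inv_le:
  assumes "f permutes {1..n}"
  shows "ninv n f \<le> ninv n (inv f)"
proof -
  have "(\<lambda>(p, q). (f q, f p)) ` Inv n f \<subseteq> Inv n (inv f)"
  proof
    fix x assume "x \<in> (\<lambda>(p, q). (f q, f p)) ` Inv n f"
    then obtain p q where x: "x = (f q, f p)" and pq: "(p, q) \<in> Inv n f" by auto
    have "f p \<in> {1..n}" "f q \<in> {1..n}" using pq permutes_in_image[OF assms] by (auto simp: Inv_def)
    then show "x \<in> Inv n (inv f)" using pq x by (auto simp: Inv_def permutes_inverses[OF assms])
  qed
  moreover have "inj_on (\<lambda>(p, q). (f q, f p)) (Inv n f)"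
    using permutes_inj[OF assms] by (auto simp: inj_on_def inj_def)
  ultimately show ?thesis unfolding ninv_def by (intro card_inj_on_le) auto
qed

lemma ninv_inv:
  assumes "f permutes {1..n}"
  shows "ninv n (inv f) = ninv n f"
proof (rule antisym)
  show "ninv n f \<le> ninv n (inv f)" by (rule ninv_inv_le[OF assms])
  have "ninv n (inv f) \<le> ninv n (inv (inv f))" by (rule ninv_inv_le[OF permutes_inv[OF assms]])
  then show "ninv n (inv f) \<le> ninv n f" using inv_inv_eq[OF permutes_bij[OF assms]] by simp
qed


lemma Sn_range: "f \<in> Sn n \<Longrightarrow> x \<in> {1..n} \<Longrightarrow> f x \<in> {1..n}"
  by (metis Sn_def mem_Collect_eq permutes_in_image)

lemma Sn_out: "f \<in> Sn n \<Longrightarrow> x \<notin> {1..n} \<Longrightarrow> f x = x"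
  by (simp add: Sn_def permutes_not_in)

lemma Sn_inj: "f \<in> Sn n \<Longrightarrow> f x = f y \<longleftrightarrow> x = y"
  by (auto simp: Sn_def dest: permutes_inj injD)

lemma Sn_comp: "f \<in> Sn n \<Longrightarrow> g \<in> Sn n \<Longrightarrow> f \<circ> g \<in> Sn n"
  by (simp add: Sn_def permutes_compose)

lemma incr_ge:
  assumes f: "f \<in> Sn n" and inc: "\<And>i. 1 \<le> i \<Longrightarrow> Suc i \<le> n \<Longrightarrow> f i < f (Suc i)"
  shows "1 \<le> p \<Longrightarrow> p \<le> n \<Longrightarrow> p \<le> f p"
proof (induction p)
  case 0 then show ?case by simp
next
  case (Suc p)
  show ?case
  proof (cases "p = 0")
    case True then show ?thesis using Sn_range[OF f, of 1] Suc by auto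
  next
    case False
    then have "p \<le> f p" using Suc by auto
    moreover have "f p < f (Suc p)" using inc[of p] False Suc by auto
    ultimately show ?thesis by simp
  qed
qed

lemma incr_le:
  assumes f: "f \<in> Sn n" and inc: "\<And>i. 1 \<le> i \<Longrightarrow> Suc i \<le> n \<Longrightarrow> f i < f (Suc i)"
  shows "1 \<le> n - k \<Longrightarrow> f (n - k) \<le> n - k"
proof (induction k)
  case 0 then show ?case using Sn_range[OF f, of n] by auto
next
  case (Suc k)
  have e: "Suc (n - Suc k) = n - k" using Suc.prems by auto
  have "f (n - Suc k) < f (n - k)" using inc[of "n - Suc k"] Suc.prems e by auto
  moreover have "f (n - k) \<le> n - k" using Suc by auto
  ultimately show ?case using e by simp
qed

lemma incr_id:
  assumes f: "f \<in> Sn n" and inc: "\<And>i. 1 \<le> i \<Longrightarrow> Suc i \<le> n \<Longrightarrow> f i < f (Suc i)"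
  shows "f = id"
proof
  fix x
  show "f x = id x"
  proof (cases "x \<in> {1..n}")
    case True
    then have "x \<le> f x" using incr_ge[OF f inc] by auto
    moreover have "f (n - (n - x)) \<le> n - (n - x)" using incr_le[OF f inc, of "n - x"] True by auto
    ultimately show ?thesis using True by auto
  next
    case False then show ?thesis using Sn_out[OF f] by simp
  qed
qed

lemma ninv0_id:
  assumes f: "f \<in> Sn n" and z: "ninv n f = 0"
  shows "f = id"
proof (rule incr_id[OF f])
  fix i assume i: "1 \<le> i" "Suc i \<le> n"
  have "Inv n f = {}" using z by (simp add: ninv_def)
  then have "\<not> f (Suc i) < f i" using i by (auto simp: Inv_def)
  moreover have "f i \<noteq> f (Suc i)" using Sn_inj[OF f] by simp
  ultimately show "f i < f (Suc i)" by simp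
qed

lemma exists_desc:
  assumes f: "f \<in> Sn n" and z: "ninv n f \<noteq> 0"
  shows "\<exists>i. 1 \<le> i \<and> Suc i \<le> n \<and> f (Suc i) < f i"
proof (rule ccontr)
  assume "\<not> ?thesis"
  then have "f = id"
    by (intro incr_id[OF f]) (metis Sn_inj[OF f] linorder_neqE_nat n_not_Suc_n)
  then show False using z by simp
qed

lemma gens_iff: "i \<in> gens n \<longleftrightarrow> 1 \<le> i \<and> Suc i \<le> n"
  by (auto simp: gens_def)

lemma words_append[simp]: "u @ v \<in> words n \<longleftrightarrow> u \<in> words n \<and> v \<in> words n"
  by (auto simp: words_def)

lemma words_Cons[simp]: "a # v \<in> words n \<longleftrightarrow> a \<in> gens n \<and> v \<in> words n"
  by (auto simp: words_def)

lemma words_Nil[simp]: "[] \<in> words n"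
  by (auto simp: words_def)

lemma reduced_exists:
  "f \<in> Sn n \<Longrightarrow> \<exists>z \<in> words n. pw z = f \<and> length z = ninv n f"
proof (induction "ninv n f" arbitrary: f)
  case 0
  then have "f = id" using ninv0_id by metis
  then show ?case using 0 by (intro bexI[of _ "[]"]) auto
next
  case (Suc m)
  obtain i where i: "1 \<le> i" "Suc i \<le> n" "f (Suc i) < f i"
    using exists_desc[OF Suc.prems] Suc.hyps(2) by auto
  have g: "f \<circ> sw i \<in> Sn n" using Sn_comp[OF Suc.prems sw_Sn[of i n]] i by (simp add: gens_iff)
  have e: "ninv n f = ninv n (f \<circ> sw i) + 1" by (rule ninv_desc[OF i])
  then have "m = ninv n (f \<circ> sw i)" using Suc.hyps(2) by simp
  from Suc.hyps(1)[OF this g] obtain z where z: "z \<in> words n" "pw z = f \<circ> sw i" "length z = ninv n (f \<circ> sw i)"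
    by auto
  have "pw (z @ [i]) = f" using z(2) by (simp add: comp_assoc)
  moreover have "z @ [i] \<in> words n" using z(1) i by (simp add: gens_iff)
  ultimately show ?case using z(3) e by (intro bexI[of _ "z @ [i]"]) auto
qed

lemma last_desc:
  assumes w: "u @ [i] \<in> words n" and r: "ninv n (pw (u @ [i])) = length (u @ [i])"
  shows "pw (u @ [i]) (Suc i) < pw (u @ [i]) i" "ninv n (pw u) = length u"
proof -
  define x where "x = pw (u @ [i])"
  have i: "1 \<le> i" "Suc i \<le> n" using w by (auto simp: gens_iff)
  have xS: "x \<in> Sn n" unfolding x_def using pw_Sn[OF w] .
  have pu: "pw u = x \<circ> sw i" unfolding x_def by (simp add: comp_assoc)
  have le: "ninv n (x \<circ> sw i) \<le> length u" using ninv_pw_le[of u n] w pu by simp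
  have rx: "ninv n x = Suc (length u)" using r unfolding x_def by simp
  show d: "x (Suc i) < x i" unfolding x_def[symmetric]
  proof (rule ccontr)
    assume "\<not> x (Suc i) < x i"
    moreover have "x (Suc i) \<noteq> x i" using Sn_inj[OF xS] by simp
    ultimately have "x i < x (Suc i)" by simp
    then have "ninv n (x \<circ> sw i) = ninv n x + 1" by (rule ninv_asc[OF i])
    then show False using le rx by simp
  qed
  have "ninv n x = ninv n (x \<circ> sw i) + 1" by (rule ninv_desc[OF i d])
  then show "ninv n (pw u) = length u" using rx pu by simp
qed


lemma sw_braid_pt: "j = Suc i \<Longrightarrow> sw i (sw j (sw i x)) = sw j (sw i (sw j x))"
  by (auto simp: sw_def)

lemma braid_eq_step1: "braid_step n a b \<Longrightarrow> braid_eq n a b"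
  unfolding braid_eq_def by auto

lemma mats_step:
  assumes IH: "\<And>u v. u \<in> words n \<Longrightarrow> v \<in> words n \<Longrightarrow> length u = m \<Longrightarrow> length v = m
                 \<Longrightarrow> ninv n (pw u) = m \<Longrightarrow> pw u = pw v \<Longrightarrow> braid_eq n u v"
    and wu: "u @ [i] \<in> words n" and wv: "v @ [j] \<in> words n"
    and lu: "length u = m" and lv: "length v = m"
    and r: "ninv n (pw (u @ [i])) = Suc m" and e: "pw (u @ [i]) = pw (v @ [j])" and ij: "i < j"
  shows "braid_eq n (u @ [i]) (v @ [j])"
proof -
  define x where "x = pw (u @ [i])"
  have ru': "ninv n (pw (u @ [i])) = length (u @ [i])" using r lu by simp
  have rv': "ninv n (pw (v @ [j])) = length (v @ [j])" using r lv e by simp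
  have du: "x (Suc i) < x i" and ru: "ninv n (pw u) = m"
    using last_desc[OF wu ru'] lu unfolding x_def by auto
  have dv: "x (Suc j) < x j" and rv: "ninv n (pw v) = m"
    using last_desc[OF wv rv'] lv e unfolding x_def by auto
  have pu: "pw u = x \<circ> sw i" unfolding x_def by (simp add: comp_assoc)
  have pv: "pw v = x \<circ> sw j" unfolding x_def e by (simp add: comp_assoc)
  have ir: "1 \<le> i" "Suc i \<le> n" and jr: "1 \<le> j" "Suc j \<le> n" and ig: "i \<in> gens n" and jg: "j \<in> gens n"
    using wu wv by (auto simp: gens_iff)
  have uw: "u \<in> words n" and vw: "v \<in> words n" using wu wv by auto
  have xS: "x \<in> Sn n" unfolding x_def using pw_Sn[OF wu] .
  show ?thesis
  proof (cases "j = Suc i")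
    case False
    then have far: "j \<ge> i + 2" using ij by simp
    have d1: "(x \<circ> sw i) (Suc j) < (x \<circ> sw i) j" using dv ij far by (simp add: sw_def)
    define y where "y = x \<circ> sw i \<circ> sw j"
    have n1: "ninv n (x \<circ> sw i) = ninv n y + 1" unfolding y_def by (rule ninv_desc[OF jr d1])
    have yS: "y \<in> Sn n" unfolding y_def
      using Sn_comp[OF Sn_comp[OF xS sw_Sn[OF ig]] sw_Sn[OF jg]] .
    obtain z where z: "z \<in> words n" "pw z = y" "length z = ninv n y"
      using reduced_exists[OF yS] by auto
    have ny: "ninv n y + 1 = m" using n1 ru pu by simp
    have e1: "pw (z @ [j]) = pw u" using z(2) pu unfolding y_def by (simp add: fun_eq_iff)
    have b1: "braid_eq n u (z @ [j])"
      by (rule IH) (use uw z jg lu ru ny e1 in auto)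
    have e2: "pw (z @ [i]) = pw v" using z(2) pv far unfolding y_def
      by (simp add: fun_eq_iff sw_comm_pt[of i j])
    have b2: "braid_eq n v (z @ [i])"
      by (rule IH) (use vw z ig lv rv ny e2 in auto)
    have s: "braid_eq n (z @ [j, i] @ []) (z @ [i, j] @ [])"
      by (rule braid_eq_step1, rule braid_step.comm) (use ig jg far in auto)
    have c1: "braid_eq n (u @ [i]) (z @ [j, i])" using braid_eq_app_r[OF b1, of "[i]"] by simp
    have c2: "braid_eq n (z @ [i, j]) (v @ [j])" using braid_eq_sym[OF braid_eq_app_r[OF b2, of "[j]"]] by simp
    show ?thesis using braid_eq_trans[OF c1 braid_eq_trans[OF _ c2]] s by simp
  next
    case True
    have d1: "(x \<circ> sw i) (Suc j) < (x \<circ> sw i) j" using dv du True by (simp add: sw_def)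
    have n1: "ninv n (x \<circ> sw i) = ninv n (x \<circ> sw i \<circ> sw j) + 1" by (rule ninv_desc[OF jr d1])
    have d2: "(x \<circ> sw i \<circ> sw j) (Suc i) < (x \<circ> sw i \<circ> sw j) i" using dv True by (simp add: sw_def)
    define y where "y = x \<circ> sw i \<circ> sw j \<circ> sw i"
    have n2: "ninv n (x \<circ> sw i \<circ> sw j) = ninv n y + 1" unfolding y_def by (rule ninv_desc[OF ir d2])
    have yS: "y \<in> Sn n" unfolding y_def
      using Sn_comp[OF Sn_comp[OF Sn_comp[OF xS sw_Sn[OF ig]] sw_Sn[OF jg]] sw_Sn[OF ig]] .
    obtain z where z: "z \<in> words n" "pw z = y" "length z = ninv n y"
      using reduced_exists[OF yS] by auto
    have ny: "ninv n y + 2 = m" using n1 n2 ru pu by simp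
    have e1: "pw (z @ [i, j]) = pw u" using z(2) pu unfolding y_def by (simp add: fun_eq_iff)
    have b1: "braid_eq n u (z @ [i, j])"
      by (rule IH) (use uw z ig jg lu ru ny e1 in auto)
    have e2: "pw (z @ [j, i]) = pw v" using z(2) pv unfolding y_def
      by (simp add: fun_eq_iff sw_braid_pt[OF True])
    have b2: "braid_eq n v (z @ [j, i])"
      by (rule IH) (use vw z ig jg lv rv ny e2 in auto)
    have s: "braid_eq n (z @ [i, j, i] @ []) (z @ [j, i, j] @ [])"
      by (rule braid_eq_step1, rule braid_step.braid) (use ig jg True in auto)
    have c1: "braid_eq n (u @ [i]) (z @ [i, j, i])" using braid_eq_app_r[OF b1, of "[i]"] by simp
    have c2: "braid_eq n (z @ [j, i, j]) (v @ [j])" using braid_eq_sym[OF braid_eq_app_r[OF b2, of "[j]"]] by simp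
    show ?thesis using braid_eq_trans[OF c1 braid_eq_trans[OF _ c2]] s by simp
  qed
qed

lemma matsumoto_aux:
  "\<And>u v. u \<in> words n \<Longrightarrow> v \<in> words n \<Longrightarrow> length u = m \<Longrightarrow> length v = m
     \<Longrightarrow> ninv n (pw u) = m \<Longrightarrow> pw u = pw v \<Longrightarrow> braid_eq n u v"
proof (induction m)
  case 0 then show ?case by simp
next
  case (Suc m u v)
  obtain u' i where u: "u = u' @ [i]" using Suc.prems(3) by (cases u rule: rev_exhaust) auto
  obtain v' j where v: "v = v' @ [j]" using Suc.prems(4) by (cases v rule: rev_exhaust) auto
  have lu: "length u' = m" using Suc.prems(3) u by simp
  have lv: "length v' = m" using Suc.prems(4) v by simp
  have wu: "u' @ [i] \<in> words n" using Suc.prems(1) u by simp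
  have wv: "v' @ [j] \<in> words n" using Suc.prems(2) v by simp
  have r: "ninv n (pw (u' @ [i])) = Suc m" using Suc.prems(5) u by (simp only:)
  have e: "pw (u' @ [i]) = pw (v' @ [j])" using Suc.prems(6) u v by (simp only:)
  consider "i = j" | "i < j" | "j < i" by arith
  then show ?case
  proof cases
    case 1
    have ru': "ninv n (pw (u' @ [i])) = length (u' @ [i])" using r lu by simp
    have ru: "ninv n (pw u') = m" using last_desc(2)[OF wu ru'] lu by simp
    have "pw u' = pw (u' @ [i]) \<circ> sw i" by (simp add: comp_assoc)
    also have "\<dots> = pw (v' @ [j]) \<circ> sw j" using e 1 by simp
    also have "\<dots> = pw v'" by (simp add: comp_assoc)
    finally have pe: "pw u' = pw v'" .
    moreover have "u' \<in> words n" "v' \<in> words n" using wu wv by auto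
    ultimately have "braid_eq n u' v'" using Suc.IH[of u' v'] lu lv ru by blast
    then show ?thesis unfolding u v 1 by (rule braid_eq_app_r)
  next
    case 2
    show ?thesis unfolding u v by (rule mats_step[OF Suc.IH wu wv lu lv r e 2]) auto
  next
    case 3
    have r': "ninv n (pw (v' @ [j])) = Suc m" using r e by simp
    have "braid_eq n (v' @ [j]) (u' @ [i])"
      by (rule mats_step[OF Suc.IH wv wu lv lu r' e[symmetric] 3]) auto
    then show ?thesis unfolding u v by (rule braid_eq_sym)
  qed
qed

lemma matsumoto:
  assumes "u \<in> words n" "v \<in> words n" "length u = length v"
     "ninv n (pw u) = length u" "pw u = pw v"
  shows "braid_eq n u v"
  by (rule matsumoto_aux[OF assms(1,2) refl assms(3)[symmetric] assms(4,5)])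


definition Pairs :: "nat \<Rightarrow> (nat \<times> nat) set" where
  "Pairs n = {(p, q). p \<in> {1..n} \<and> q \<in> {1..n} \<and> p < q}"

definition NP :: "nat \<Rightarrow> nat" where "NP n = card (Pairs n)"

definition rv :: "nat \<Rightarrow> nat \<Rightarrow> nat" where
  "rv n x = (if x \<in> {1..n} then Suc n - x else x)"

definition cyc :: "nat \<Rightarrow> nat \<Rightarrow> nat" where
  "cyc m x = (if x = Suc m then 1 else if x \<in> {1..m} then Suc x else x)"

lemma finite_Pairs[simp]: "finite (Pairs n)"
  by (rule finite_subset[of _ "{1..n} \<times> {1..n}"]) (auto simp: Pairs_def)

lemma pw_upt: "pw [1..<Suc m] = cyc m"
proof (induction m)
  case 0 then show ?case by (auto simp: cyc_def fun_eq_iff)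
next
  case (Suc m)
  have "[1..<Suc (Suc m)] = [1..<Suc m] @ [Suc m]" by simp
  then have "pw [1..<Suc (Suc m)] = cyc m \<circ> sw (Suc m)" using Suc by simp
  also have "\<dots> = cyc (Suc m)" by (auto simp: fun_eq_iff cyc_def sw_def)
  finally show ?case .
qed

lemma pw_Delta: "pw (Delta m) = rv m"
proof (induction m)
  case 0 then show ?case by (auto simp: rv_def fun_eq_iff)
next
  case (Suc m)
  have "Delta (Suc m) = [1..<Suc m] @ Delta m" by (simp only: Delta.simps)
  then have "pw (Delta (Suc m)) = pw [1..<Suc m] \<circ> pw (Delta m)" by (simp only: pw_append)
  then have "pw (Delta (Suc m)) = cyc m \<circ> rv m" by (simp only: pw_upt Suc.IH)
  also have "\<dots> = rv (Suc m)" by (auto simp: fun_eq_iff cyc_def rv_def)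
  finally show ?case .
qed

lemma Delta_words: "Delta m \<in> words m"
proof (induction m)
  case 0 then show ?case by (simp add: words_def)
next
  case (Suc m)
  then show ?case by (fastforce simp: words_def gens_def)
qed

lemma NP_Suc: "NP (Suc m) = NP m + m"
proof -
  have "Pairs (Suc m) = Pairs m \<union> (\<lambda>p. (p, Suc m)) ` {1..m}"
    by (auto simp: Pairs_def)
  moreover have "Pairs m \<inter> (\<lambda>p. (p, Suc m)) ` {1..m} = {}" by (auto simp: Pairs_def)
  moreover have "card ((\<lambda>p. (p, Suc m)) ` {1..m}) = m"
    by (subst card_image) (auto simp: inj_on_def)
  ultimately show ?thesis unfolding NP_def by (simp add: card_Un_disjoint)
qed

lemma length_Delta: "length (Delta m) = NP m"
proof (induction m)
  case 0 then show ?case by (simp add: NP_def Pairs_def)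
next
  case (Suc m) then show ?case by (simp add: NP_Suc)
qed

lemma Inv_rv: "Inv n (rv n) = Pairs n"
  by (auto simp: Inv_def Pairs_def rv_def)

lemma ninv_rv: "ninv n (rv n) = NP n"
  by (simp add: ninv_def NP_def Inv_rv)

lemma Inv_Pairs: "Inv n f \<subseteq> Pairs n"
  by (auto simp: Inv_def Pairs_def)

lemma ninv_le_NP: "ninv n f \<le> NP n"
  unfolding ninv_def NP_def by (rule card_mono[OF finite_Pairs Inv_Pairs])

lemma rv_rv: "rv n (rv n x) = x"
  by (auto simp: rv_def)

lemma rv_Sn: "rv n \<in> Sn n"
  unfolding Sn_def mem_Collect_eq
proof (rule inj_imp_permutes)
  show "inj_on (rv n) {1..n}" by (metis inj_onI rv_rv)
qed (auto simp: rv_def)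

lemma adj_desc_decr:
  fixes f :: "nat \<Rightarrow> nat"
  assumes d: "\<And>i. 1 \<le> i \<Longrightarrow> Suc i \<le> n \<Longrightarrow> f (Suc i) < f i"
  shows "1 \<le> p \<Longrightarrow> p < q \<Longrightarrow> q \<le> n \<Longrightarrow> f q < f p"
proof (induction q)
  case 0 then show ?case by simp
next
  case (Suc q)
  show ?case
  proof (cases "p = q")
    case True then show ?thesis using d[of p] Suc.prems by simp
  next
    case False
    then have "f q < f p" using Suc by simp
    moreover have "f (Suc q) < f q" using d[of q] Suc.prems False by simp
    ultimately show ?thesis by (meson less_trans)
  qed
qed

lemma ninv_max:
  assumes f: "f \<in> Sn n" and m: "ninv n f = NP n"
  shows "f = rv n"
proof -
  have "Inv n f = Pairs n"
    using card_subset_eq[OF finite_Pairs Inv_Pairs] m by (simp add: ninv_def NP_def)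
  then have dec: "\<And>p q. p \<in> {1..n} \<Longrightarrow> q \<in> {1..n} \<Longrightarrow> p < q \<Longrightarrow> f q < f p"
    unfolding Inv_def Pairs_def by blast
  have g: "f \<circ> rv n \<in> Sn n" by (rule Sn_comp[OF f rv_Sn])
  have "f \<circ> rv n = id"
  proof (rule incr_id[OF g])
    fix i assume i: "1 \<le> i" "Suc i \<le> n"
    have "rv n (Suc i) < rv n i" "rv n i \<in> {1..n}" "rv n (Suc i) \<in> {1..n}"
      using i by (auto simp: rv_def)
    then show "(f \<circ> rv n) i < (f \<circ> rv n) (Suc i)" using dec by simp
  qed
  then have "f \<circ> rv n \<circ> rv n = rv n" by simp
  moreover have "f \<circ> rv n \<circ> rv n = f" by (simp add: fun_eq_iff rv_rv)
  ultimately show ?thesis by simp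
qed

lemma exists_asc:
  assumes f: "f \<in> Sn n" and lt: "ninv n f < NP n"
  shows "\<exists>i. 1 \<le> i \<and> Suc i \<le> n \<and> f i < f (Suc i)"
proof (rule ccontr)
  assume "\<not> ?thesis"
  then have d: "\<And>i. 1 \<le> i \<Longrightarrow> Suc i \<le> n \<Longrightarrow> f (Suc i) < f i"
    by (metis Sn_inj[OF f] linorder_neqE_nat n_not_Suc_n)
  have "Pairs n \<subseteq> Inv n f"
    using adj_desc_decr[of n f, OF d] by (auto simp: Pairs_def Inv_def)
  then have "Inv n f = Pairs n" using Inv_Pairs by blast
  then show False using lt by (simp add: ninv_def NP_def)
qed

lemma extend_max:
  "f \<in> Sn n \<Longrightarrow> \<exists>y \<in> words n. ninv n (f \<circ> pw y) = ninv n f + length y \<and> ninv n (f \<circ> pw y) = NP n"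
proof (induction "NP n - ninv n f" arbitrary: f)
  case 0
  then have "ninv n f = NP n" using ninv_le_NP[of n f] by simp
  then show ?case by (intro bexI[of _ "[]"]) auto
next
  case (Suc k)
  have "ninv n f < NP n" using Suc.hyps(2) by simp
  then obtain i where i: "1 \<le> i" "Suc i \<le> n" "f i < f (Suc i)"
    using exists_asc[OF Suc.prems] by auto
  have g: "f \<circ> sw i \<in> Sn n" using Sn_comp[OF Suc.prems sw_Sn[of i n]] i by (simp add: gens_iff)
  have e: "ninv n (f \<circ> sw i) = ninv n f + 1" by (rule ninv_asc[OF i])
  then have "k = NP n - ninv n (f \<circ> sw i)" using Suc.hyps(2) by simp
  from Suc.hyps(1)[OF this g] obtain y where y: "y \<in> words n"
    "ninv n (f \<circ> sw i \<circ> pw y) = ninv n (f \<circ> sw i) + length y" "ninv n (f \<circ> sw i \<circ> pw y) = NP n"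
    by auto
  have c: "f \<circ> pw (i # y) = f \<circ> sw i \<circ> pw y" by (simp add: comp_assoc)
  show ?case
    by (rule bexI[of _ "i # y"]) (use y c e i in \<open>auto simp: gens_iff\<close>)
qed

definition red :: "nat \<Rightarrow> nat list set" where
  "red n = {w \<in> words n. ninv n (pw w) = length w}"

lemma simple_red: "simple_words n = red n"
proof (intro set_eqI iffI)
  fix w assume "w \<in> simple_words n"
  then obtain v where w: "w \<in> words n" and v: "v \<in> words n" and b: "braid_eq n (w @ v) (Delta n)"
    by (auto simp: simple_words_def left_div_def)
  have p: "pw w \<circ> pw v = rv n" and l: "length w + length v = NP n"
    using braid_eq_pw[OF b] by (auto simp: pw_Delta length_Delta)
  have "NP n \<le> ninv n (pw w) + length v"
    using ninv_comp_pw_le[OF v, of "pw w"] p ninv_rv by simp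
  then have "length w \<le> ninv n (pw w)" using l by simp
  moreover have "ninv n (pw w) \<le> length w" by (rule ninv_pw_le[OF w])
  ultimately show "w \<in> red n" using w by (simp add: red_def)
next
  fix w assume "w \<in> red n"
  then have w: "w \<in> words n" and r: "ninv n (pw w) = length w" by (auto simp: red_def)
  obtain y where y: "y \<in> words n" "ninv n (pw w \<circ> pw y) = ninv n (pw w) + length y"
    "ninv n (pw w \<circ> pw y) = NP n"
    using extend_max[OF pw_Sn[OF w]] by auto
  have wy: "w @ y \<in> words n" using w y by simp
  have pe: "pw (w @ y) = pw (Delta n)"
    using ninv_max[OF pw_Sn[OF wy]] y(3) by (simp add: pw_Delta)
  have "braid_eq n (w @ y) (Delta n)"
    by (rule matsumoto[OF wy Delta_words]) (use y r pe in \<open>auto simp: length_Delta\<close>)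
  then show "w \<in> simple_words n" using w y by (auto simp: simple_words_def left_div_def)
qed

definition DesR :: "nat \<Rightarrow> (nat \<Rightarrow> nat) \<Rightarrow> nat set" where
  "DesR n f = {i \<in> gens n. f (Suc i) < f i}"

definition DesL :: "nat \<Rightarrow> (nat \<Rightarrow> nat) \<Rightarrow> nat set" where
  "DesL n f = DesR n (inv f)"

lemma DR_red:
  assumes w: "w \<in> red n"
  shows "DR n w = DesR n (pw w)"
proof (intro set_eqI iffI)
  have ww: "w \<in> words n" and r: "ninv n (pw w) = length w" using w by (auto simp: red_def)
  fix i
  {
    assume "i \<in> DR n w"
    then obtain v where i: "i \<in> gens n" and v: "v \<in> words n" and b: "braid_eq n (v @ [i]) w"
      by (auto simp: DR_def right_div_def)
    have e: "pw (v @ [i]) = pw w" "length (v @ [i]) = length w" using braid_eq_pw[OF b] by auto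
    have vi: "v @ [i] \<in> words n" using v i by simp
    have "pw (v @ [i]) (Suc i) < pw (v @ [i]) i"
      by (rule last_desc(1)[OF vi]) (use e r in simp)
    then have "pw w (Suc i) < pw w i" unfolding e(1) .
    then show "i \<in> DesR n (pw w)" using i by (simp add: DesR_def)
  next
    assume "i \<in> DesR n (pw w)"
    then have i: "i \<in> gens n" and d: "pw w (Suc i) < pw w i" by (auto simp: DesR_def)
    have ir: "1 \<le> i" "Suc i \<le> n" using i by (auto simp: gens_iff)
    have g: "pw w \<circ> sw i \<in> Sn n" by (rule Sn_comp[OF pw_Sn[OF ww] sw_Sn[OF i]])
    have e: "ninv n (pw w) = ninv n (pw w \<circ> sw i) + 1" by (rule ninv_desc[OF ir d])
    obtain z where z: "z \<in> words n" "pw z = pw w \<circ> sw i" "length z = ninv n (pw w \<circ> sw i)"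
      using reduced_exists[OF g] by auto
    have pz: "pw (z @ [i]) = pw w" using z(2) by (simp add: comp_assoc)
    have "braid_eq n (z @ [i]) w"
      by (rule matsumoto) (use z i ww pz e r in auto)
    then show "i \<in> DR n w" using z i by (auto simp: DR_def right_div_def)
  }
qed

lemma left_right_rev: "left_div n [i] w \<longleftrightarrow> right_div n [i] (rev w)"
proof
  assume "left_div n [i] w"
  then obtain v where v: "v \<in> words n" "braid_eq n ([i] @ v) w" by (auto simp: left_div_def)
  have "braid_eq n (rev v @ [i]) (rev w)" using braid_eq_rev[OF v(2)] by simp
  moreover have "rev v \<in> words n" using v(1) by (simp add: words_def)
  ultimately show "right_div n [i] (rev w)" by (auto simp: right_div_def)
next
  assume "right_div n [i] (rev w)"
  then obtain v where v: "v \<in> words n" "braid_eq n (v @ [i]) (rev w)" by (auto simp: right_div_def)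
  have "braid_eq n ([i] @ rev v) w" using braid_eq_rev[OF v(2)] by simp
  moreover have "rev v \<in> words n" using v(1) by (simp add: words_def)
  ultimately show "left_div n [i] w" by (auto simp: left_div_def)
qed

lemma DL_DR_rev: "DL n w = DR n (rev w)"
  by (simp add: DL_def DR_def left_right_rev)

lemma bij_sw: "bij (sw i)"
  by (rule o_bij[of "sw i"]) auto

lemma inv_sw: "inv (sw i) = sw i"
  by (rule inv_unique_comp) auto

lemma pw_rev: "w \<in> words n \<Longrightarrow> pw (rev w) = inv (pw w)"
proof (induction w)
  case Nil then show ?case by simp
next
  case (Cons a w)
  then have w: "w \<in> words n" by simp
  have b: "bij (pw w)" using pw_Sn[OF w] by (simp add: Sn_def permutes_bij)
  have "pw (rev (a # w)) = inv (pw w) \<circ> sw a" using Cons w by simp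
  also have "\<dots> = inv (sw a \<circ> pw w)" using o_inv_distrib[OF bij_sw b] inv_sw by simp
  finally show ?case by (simp only: pw.simps)
qed

lemma rev_red: "w \<in> red n \<Longrightarrow> rev w \<in> red n"
  using pw_rev[of w n] ninv_inv[of "pw w" n] pw_Sn[of w n]
  by (auto simp: red_def words_def Sn_def)

lemma DL_red:
  assumes w: "w \<in> red n"
  shows "DL n w = DesL n (pw w)"
proof -
  have "DL n w = DR n (rev w)" by (rule DL_DR_rev)
  also have "\<dots> = DesR n (pw (rev w))" by (rule DR_red[OF rev_red[OF w]])
  also have "\<dots> = DesL n (pw w)" using pw_rev[of w n] w by (simp add: DesL_def red_def)
  finally show ?thesis .
qed

lemma card_img_eq:
  assumes "\<And>x y. x \<in> S \<Longrightarrow> y \<in> S \<Longrightarrow> F x = F y \<longleftrightarrow> G x = G y"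
  shows "card (F ` S) = card (G ` S)"
proof -
  define h where "h a = G (inv_into S F a)" for a
  have hF: "h (F x) = G x" if "x \<in> S" for x
  proof -
    have "inv_into S F (F x) \<in> S" "F (inv_into S F (F x)) = F x"
      using that by (auto intro: inv_into_into f_inv_into_f)
    then show ?thesis using assms that unfolding h_def by blast
  qed
  have "bij_betw h (F ` S) (G ` S)"
  proof (rule bij_betw_imageI)
    show "inj_on h (F ` S)"
      by (auto simp: inj_on_def hF assms)
    show "h ` F ` S = G ` S" using hF by (auto simp: image_iff)
  qed
  then show ?thesis by (rule bij_betw_same_card)
qed

lemma braid_class_eq:
  "x \<in> words n \<Longrightarrow> y \<in> words n \<Longrightarrow> braid_class n x = braid_class n y \<longleftrightarrow> braid_eq n x y"
proof
  assume "x \<in> words n" "y \<in> words n" "braid_class n x = braid_class n y"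
  then have "y \<in> braid_class n x" by (auto simp: braid_class_def)
  then show "braid_eq n x y" by (simp add: braid_class_def)
next
  assume "braid_eq n x y"
  then show "braid_class n x = braid_class n y"
    unfolding braid_class_def using braid_eq_trans braid_eq_sym by blast
qed

lemma transfer:
  "card (braid_class n ` {w \<in> simple_words n. P (DL n w) (DR n w)})
   = card {f \<in> Sn n. P (DesL n f) (DesR n f)}"
proof -
  let ?S = "{w \<in> simple_words n. P (DL n w) (DR n w)}"
  have S: "?S = {w \<in> red n. P (DesL n (pw w)) (DesR n (pw w))}"
    by (auto simp: simple_red DL_red DR_red)
  have "card (braid_class n ` ?S) = card (pw ` ?S)"
  proof (rule card_img_eq)
    fix x y assume "x \<in> ?S" "y \<in> ?S"
    then have x: "x \<in> red n" and y: "y \<in> red n" using S by auto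
    then have xw: "x \<in> words n" "ninv n (pw x) = length x" and yw: "y \<in> words n" "ninv n (pw y) = length y"
      by (auto simp: red_def)
    show "braid_class n x = braid_class n y \<longleftrightarrow> pw x = pw y"
    proof
      assume "braid_class n x = braid_class n y"
      then show "pw x = pw y" using braid_class_eq[OF xw(1) yw(1)] braid_eq_pw by blast
    next
      assume "pw x = pw y"
      then have "braid_eq n x y" using matsumoto[OF xw(1) yw(1)] xw yw by simp
      then show "braid_class n x = braid_class n y" using braid_class_eq[OF xw(1) yw(1)] by simp
    qed
  qed
  also have "pw ` ?S = {f \<in> Sn n. P (DesL n f) (DesR n f)}"
  proof (intro set_eqI iffI)
    fix f assume "f \<in> pw ` ?S"
    then show "f \<in> {f \<in> Sn n. P (DesL n f) (DesR n f)}" unfolding S using pw_Sn by (auto simp: red_def)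
  next
    fix f assume f: "f \<in> {f \<in> Sn n. P (DesL n f) (DesR n f)}"
    then obtain z where z: "z \<in> words n" "pw z = f" "length z = ninv n f"
      using reduced_exists by blast
    then have "z \<in> red n" by (simp add: red_def)
    then show "f \<in> pw ` ?S" unfolding S using z f by auto
  qed
  finally show ?thesis .
qed


definition blk :: "nat set \<Rightarrow> nat \<Rightarrow> nat" where
  "blk K p = card ({1..<p} - K)"

lemma blk_split:
  assumes "1 \<le> p" "p \<le> q"
  shows "blk K q = blk K p + card ({p..<q} - K)"
proof -
  have "{1..<q} - K = ({1..<p} - K) \<union> ({p..<q} - K)" using assms by auto
  moreover have "({1..<p} - K) \<inter> ({p..<q} - K) = {}" by auto
  ultimately show ?thesis unfolding blk_def by (simp add: card_Un_disjoint)
qed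

lemma blk_mono: "1 \<le> p \<Longrightarrow> p \<le> q \<Longrightarrow> blk K p \<le> blk K q"
  using blk_split[of p q K] by linarith

lemma blk_eq_iff:
  assumes "1 \<le> p" "p \<le> q"
  shows "blk K p = blk K q \<longleftrightarrow> {p..<q} \<subseteq> K"
proof -
  have "blk K p = blk K q \<longleftrightarrow> card ({p..<q} - K) = 0" using blk_split[OF assms, of K] by linarith
  also have "\<dots> \<longleftrightarrow> {p..<q} - K = {}" by simp
  also have "\<dots> \<longleftrightarrow> {p..<q} \<subseteq> K" by blast
  finally show ?thesis .
qed

lemma chain_decr:
  fixes h :: "nat \<Rightarrow> nat"
  assumes d: "\<And>i. p \<le> i \<Longrightarrow> i < q \<Longrightarrow> h (Suc i) < h i"
  shows "p < q \<Longrightarrow> h q < h p"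
  using d
proof (induction q)
  case 0 then show ?case by simp
next
  case (Suc q)
  show ?case
  proof (cases "p = q")
    case True then show ?thesis using Suc.prems(2)[of p] by simp
  next
    case False
    then have "h q < h p" using Suc by simp
    moreover have "h (Suc q) < h q" using Suc.prems(2)[of q] Suc.prems(1) False by simp
    ultimately show ?thesis by (meson less_trans)
  qed
qed

lemma DesR_blk:
  assumes K: "K \<subseteq> DesR n h" and p: "p \<in> {1..n}" and q: "q \<in> {1..n}" and pq: "p < q"
    and b: "blk K p = blk K q"
  shows "h q < h p"
proof (rule chain_decr[OF _ pq])
  fix i assume i: "p \<le> i" "i < q"
  have "{p..<q} \<subseteq> K" using blk_eq_iff[of p q K] p pq b by auto
  then have "i \<in> DesR n h" using i K by auto
  then show "h (Suc i) < h i" by (simp add: DesR_def)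
qed

definition W :: "nat \<Rightarrow> nat set \<Rightarrow> (nat \<Rightarrow> nat) set" where
  "W n K = {w \<in> Sn n. \<forall>p \<in> {1..n}. blk K (w p) = blk K p}"

lemma id_Sn: "id \<in> Sn n"
  by (simp add: Sn_def permutes_id)

lemma id_W: "id \<in> W n K"
  by (simp add: W_def id_Sn)

lemma W_comp: "v \<in> W n K \<Longrightarrow> w \<in> W n K \<Longrightarrow> v \<circ> w \<in> W n K"
  unfolding W_def using Sn_comp Sn_range by auto

lemma inv_Sn: "f \<in> Sn n \<Longrightarrow> inv f \<in> Sn n"
  by (simp add: Sn_def permutes_inv)

lemma inv_Sn_simps: "f \<in> Sn n \<Longrightarrow> f (inv f x) = x" "f \<in> Sn n \<Longrightarrow> inv f (f x) = x"
  by (simp_all add: Sn_def permutes_inverses)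

lemma inv_o_Sn: "f \<in> Sn n \<Longrightarrow> f \<circ> inv f = id" "f \<in> Sn n \<Longrightarrow> inv f \<circ> f = id"
  by (simp_all add: fun_eq_iff inv_Sn_simps)

lemma W_inv: "w \<in> W n K \<Longrightarrow> inv w \<in> W n K"
proof -
  assume w: "w \<in> W n K"
  then have wS: "w \<in> Sn n" by (simp add: W_def)
  have "blk K (inv w p) = blk K p" if p: "p \<in> {1..n}" for p
  proof -
    have "inv w p \<in> {1..n}" using Sn_range[OF inv_Sn[OF wS] p] .
    then have "blk K (w (inv w p)) = blk K (inv w p)" using w by (simp add: W_def)
    then show ?thesis using inv_Sn_simps(1)[OF wS] by simp
  qed
  then show ?thesis using inv_Sn[OF wS] by (simp add: W_def)
qed

lemma sw_W:
  assumes j: "j \<in> K" "j \<in> gens n"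
  shows "sw j \<in> W n K"
proof -
  have jr: "1 \<le> j" "Suc j \<le> n" using j by (auto simp: gens_iff)
  have b: "blk K j = blk K (Suc j)" using blk_eq_iff[of j "Suc j" K] jr j by auto
  show ?thesis using sw_Sn[OF j(2)] b by (auto simp: W_def sw_def)
qed

definition DC :: "nat \<Rightarrow> nat set \<Rightarrow> nat set \<Rightarrow> (nat \<Rightarrow> nat) \<Rightarrow> (nat \<Rightarrow> nat) set" where
  "DC n I J x = {u \<circ> x \<circ> w | u w. u \<in> W n I \<and> w \<in> W n J}"

lemma W_Sn: "w \<in> W n K \<Longrightarrow> w \<in> Sn n"
  by (simp add: W_def)

lemma DC_Sn: "x \<in> Sn n \<Longrightarrow> DC n I J x \<subseteq> Sn n"
  unfolding DC_def by (auto intro!: Sn_comp dest: W_Sn)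

lemma DC_self: "x \<in> DC n I J x"
proof -
  have "x = id \<circ> x \<circ> id" by simp
  then show ?thesis unfolding DC_def using id_W[of n I] id_W[of n J] by blast
qed

lemma DC_mem_eq:
  assumes y: "y \<in> DC n I J x"
  shows "DC n I J y = DC n I J x"
proof -
  obtain u w where u: "u \<in> W n I" and w: "w \<in> W n J" and yd: "y = u \<circ> x \<circ> w"
    using y by (auto simp: DC_def)
  have uS: "u \<in> Sn n" and wS: "w \<in> Sn n" using u w by (auto simp: W_def)
  show ?thesis
  proof (intro set_eqI iffI)
    fix z assume "z \<in> DC n I J y"
    then obtain u' w' where "u' \<in> W n I" "w' \<in> W n J" "z = u' \<circ> y \<circ> w'" by (auto simp: DC_def)
    then have "z = (u' \<circ> u) \<circ> x \<circ> (w \<circ> w')" using yd by (simp add: comp_assoc)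
    then show "z \<in> DC n I J x" unfolding DC_def using W_comp[OF \<open>u' \<in> W n I\<close> u] W_comp[OF w \<open>w' \<in> W n J\<close>]
      by blast
  next
    fix z assume "z \<in> DC n I J x"
    then obtain u' w' where u': "u' \<in> W n I" and w': "w' \<in> W n J" and z: "z = u' \<circ> x \<circ> w'" by (auto simp: DC_def)
    have "z = (u' \<circ> inv u) \<circ> y \<circ> (inv w \<circ> w')"
      unfolding z yd by (simp add: fun_eq_iff inv_Sn_simps[OF uS] inv_Sn_simps[OF wS])
    then show "z \<in> DC n I J y" unfolding DC_def
      using W_comp[OF u' W_inv[OF u]] W_comp[OF W_inv[OF w] w'] by blast
  qed
qed

definition CC :: "nat \<Rightarrow> nat set \<Rightarrow> nat set \<Rightarrow> (nat \<Rightarrow> nat) set" where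
  "CC n I J = {f \<in> Sn n. I \<subseteq> DesL n f \<and> J \<subseteq> DesR n f}"

lemma finite_Sn: "finite (Sn n)"
  unfolding Sn_def by (rule finite_permutations) simp


lemma inv_comp_sw:
  assumes f: "f \<in> Sn n"
  shows "inv (sw i \<circ> f) = inv f \<circ> sw i"
proof -
  have b: "bij f" using f by (simp add: Sn_def permutes_bij)
  show ?thesis using o_inv_distrib[OF bij_sw b] inv_sw by simp
qed

lemma DC_has_CC:
  assumes x: "x \<in> Sn n" and I: "I \<subseteq> gens n" and J: "J \<subseteq> gens n"
  shows "\<exists>f \<in> DC n I J x. f \<in> CC n I J"
proof -
  let ?D = "DC n I J x"
  have fin: "finite ?D" using DC_Sn[OF x] finite_Sn finite_subset by blast
  have ne: "?D \<noteq> {}" using DC_self by blast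
  define M where "M = Max (ninv n ` ?D)"
  have "M \<in> ninv n ` ?D" unfolding M_def using fin ne by (intro Max_in) auto
  then obtain f where fD: "f \<in> ?D" and fM: "ninv n f = M" by (auto simp del: ninv_def)
  have le: "ninv n y \<le> M" if "y \<in> ?D" for y
    unfolding M_def using fin that by (intro Max_ge) auto
  have fS: "f \<in> Sn n" using fD DC_Sn[OF x] by blast
  have Df: "DC n I J f = ?D" by (rule DC_mem_eq[OF fD])
  have "J \<subseteq> DesR n f"
  proof
    fix j assume jJ: "j \<in> J"
    then have jg: "j \<in> gens n" using J by auto
    then have jr: "1 \<le> j" "Suc j \<le> n" by (auto simp: gens_iff)
    show "j \<in> DesR n f"
    proof (rule ccontr)
      assume "j \<notin> DesR n f"
      then have "\<not> f (Suc j) < f j" using jg by (simp add: DesR_def)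
      moreover have "f (Suc j) \<noteq> f j" using Sn_inj[OF fS] by simp
      ultimately have a: "f j < f (Suc j)" by simp
      have "f \<circ> sw j = id \<circ> f \<circ> sw j" by simp
      then have "f \<circ> sw j \<in> DC n I J f" unfolding DC_def using id_W sw_W[OF jJ jg] by blast
      then have "ninv n (f \<circ> sw j) \<le> M" using le Df by blast
      moreover have "ninv n (f \<circ> sw j) = ninv n f + 1" by (rule ninv_asc[OF jr a])
      ultimately show False using fM by simp
    qed
  qed
  moreover have "I \<subseteq> DesL n f"
  proof
    fix i assume iI: "i \<in> I"
    then have ig: "i \<in> gens n" using I by auto
    then have ir: "1 \<le> i" "Suc i \<le> n" by (auto simp: gens_iff)
    show "i \<in> DesL n f"
    proof (rule ccontr)
      assume "i \<notin> DesL n f"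
      then have "\<not> inv f (Suc i) < inv f i" using ig by (simp add: DesL_def DesR_def)
      moreover have "inv f (Suc i) \<noteq> inv f i" using Sn_inj[OF inv_Sn[OF fS]] by simp
      ultimately have a: "inv f i < inv f (Suc i)" by simp
      have "sw i \<circ> f = sw i \<circ> f \<circ> id" by simp
      then have "sw i \<circ> f \<in> DC n I J f" unfolding DC_def using id_W sw_W[OF iI ig] by blast
      then have "ninv n (sw i \<circ> f) \<le> M" using le Df by blast
      moreover have gS: "sw i \<circ> f \<in> Sn n" by (rule Sn_comp[OF sw_Sn[OF ig] fS])
      have "ninv n (sw i \<circ> f) = ninv n (inv (sw i \<circ> f))"
        using ninv_inv[of "sw i \<circ> f" n] gS by (simp add: Sn_def)
      also have "\<dots> = ninv n (inv f \<circ> sw i)" by (simp add: inv_comp_sw[OF fS])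
      also have "\<dots> = ninv n (inv f) + 1" by (rule ninv_asc[OF ir a])
      also have "\<dots> = ninv n f + 1" using ninv_inv[of f n] fS by (simp add: Sn_def)
      finally show False using fM \<open>ninv n (sw i \<circ> f) \<le> M\<close> by simp
    qed
  qed
  ultimately show ?thesis using fD fS by (auto simp: CC_def)
qed

lemma downclosed_eq:
  fixes A B K :: "nat set"
  assumes fin: "finite K" and AK: "A \<subseteq> K" and BK: "B \<subseteq> K"
    and dA: "\<And>p q. q \<in> A \<Longrightarrow> p \<in> K \<Longrightarrow> p < q \<Longrightarrow> p \<in> A"
    and dB: "\<And>p q. q \<in> B \<Longrightarrow> p \<in> K \<Longrightarrow> p < q \<Longrightarrow> p \<in> B"
    and c: "card A = card B"
  shows "A = B"
proof -
  have "A \<subseteq> B \<or> B \<subseteq> A"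
  proof (rule ccontr)
    assume "\<not> ?thesis"
    then obtain a b where a: "a \<in> A" "a \<notin> B" and b: "b \<in> B" "b \<notin> A" by blast
    consider "a < b" | "b < a" | "a = b" by arith
    then show False
    proof cases
      case 1 then show False using dB[OF b(1), of a] a AK by auto
    next
      case 2 then show False using dA[OF a(1), of b] b BK by auto
    next
      case 3 then show False using a b by simp
    qed
  qed
  moreover have "finite A" "finite B" using fin AK BK finite_subset by auto
  ultimately show ?thesis using c card_subset_eq by metis
qed

lemma antitone_perm_eq:
  fixes \<phi> \<psi> :: "nat \<Rightarrow> nat"
  assumes fin: "finite K" and w: "bij_betw w K K" and e: "\<And>q. q \<in> K \<Longrightarrow> \<psi> q = \<phi> (w q)"
    and a\<phi>: "\<And>p q. p \<in> K \<Longrightarrow> q \<in> K \<Longrightarrow> p < q \<Longrightarrow> \<phi> q \<le> \<phi> p"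
    and a\<psi>: "\<And>p q. p \<in> K \<Longrightarrow> q \<in> K \<Longrightarrow> p < q \<Longrightarrow> \<psi> q \<le> \<psi> p"
    and q: "q \<in> K"
  shows "\<psi> q = \<phi> q"
proof -
  have AB: "{p \<in> K. t \<le> \<psi> p} = {p \<in> K. t \<le> \<phi> p}" for t
  proof (rule downclosed_eq[OF fin])
    have "w ` {p \<in> K. t \<le> \<psi> p} = {p \<in> K. t \<le> \<phi> p}"
    proof (intro set_eqI iffI)
      fix a assume "a \<in> w ` {p \<in> K. t \<le> \<psi> p}"
      then obtain p where "p \<in> K" "t \<le> \<psi> p" "a = w p" by auto
      then show "a \<in> {p \<in> K. t \<le> \<phi> p}" using e w by (auto simp: bij_betw_def)
    next
      fix a assume a: "a \<in> {p \<in> K. t \<le> \<phi> p}"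
      then obtain p where p: "p \<in> K" "a = w p" using w by (auto simp: bij_betw_def)
      then show "a \<in> w ` {p \<in> K. t \<le> \<psi> p}" using a e by auto
    qed
    moreover have "inj_on w {p \<in> K. t \<le> \<psi> p}"
      using w by (auto simp: bij_betw_def intro: inj_on_subset)
    ultimately show "card {p \<in> K. t \<le> \<psi> p} = card {p \<in> K. t \<le> \<phi> p}"
      by (metis card_image)
  next
    fix p r assume "r \<in> {p \<in> K. t \<le> \<psi> p}" "p \<in> K" "p < r"
    then show "p \<in> {p \<in> K. t \<le> \<psi> p}" using a\<psi>[of p r] by auto
  next
    fix p r assume "r \<in> {p \<in> K. t \<le> \<phi> p}" "p \<in> K" "p < r"
    then show "p \<in> {p \<in> K. t \<le> \<phi> p}" using a\<phi>[of p r] by auto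
  qed auto
  have "q \<in> {p \<in> K. \<psi> q \<le> \<psi> p}" using q by simp
  then have "\<psi> q \<le> \<phi> q" using AB[of "\<psi> q"] by blast
  moreover have "q \<in> {p \<in> K. \<phi> q \<le> \<phi> p}" using q by simp
  then have "\<phi> q \<le> \<psi> q" using AB[of "\<phi> q"] by blast
  ultimately show ?thesis by simp
qed

lemma count_gt:
  assumes h: "h \<in> Sn n" and I: "I \<subseteq> DesR n (inv h)" and q: "q \<in> {1..n}"
  shows "card {v \<in> {1..n}. blk I v = blk I (h q) \<and> h q < v}
       = card {q' \<in> {1..n}. blk I (h q') = blk I (h q) \<and> q' < q}"
proof -
  have hi: "inv h \<in> Sn n" by (rule inv_Sn[OF h])
  have hq: "h q \<in> {1..n}" using Sn_range[OF h q] .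
  have "h ` {q' \<in> {1..n}. blk I (h q') = blk I (h q) \<and> q' < q} = {v \<in> {1..n}. blk I v = blk I (h q) \<and> h q < v}"
  proof (intro set_eqI iffI)
    fix v assume "v \<in> h ` {q' \<in> {1..n}. blk I (h q') = blk I (h q) \<and> q' < q}"
    then obtain q' where q': "q' \<in> {1..n}" "blk I (h q') = blk I (h q)" "q' < q" "v = h q'" by auto
    have hq': "h q' \<in> {1..n}" using Sn_range[OF h q'(1)] .
    have "h q < h q'"
    proof (rule ccontr)
      assume "\<not> h q < h q'"
      moreover have "h q \<noteq> h q'" using Sn_inj[OF h] q'(3) by simp
      ultimately have "h q' < h q" by simp
      then have "inv h (h q) < inv h (h q')" using DesR_blk[OF I hq' hq] q'(2) by simp
      then show False using q'(3) inv_Sn_simps(2)[OF h] by simp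
    qed
    then show "v \<in> {v \<in> {1..n}. blk I v = blk I (h q) \<and> h q < v}" using q' hq' by simp
  next
    fix v assume v: "v \<in> {v \<in> {1..n}. blk I v = blk I (h q) \<and> h q < v}"
    then have vr: "v \<in> {1..n}" by simp
    let ?q' = "inv h v"
    have "inv h v < inv h (h q)" using DesR_blk[OF I hq vr] v by simp
    then have "?q' < q" using inv_Sn_simps(2)[OF h] by simp
    moreover have "?q' \<in> {1..n}" using Sn_range[OF hi vr] .
    moreover have "h ?q' = v" using inv_Sn_simps(1)[OF h] by simp
    ultimately have "?q' \<in> {q' \<in> {1..n}. blk I (h q') = blk I (h q) \<and> q' < q}" "v = h ?q'"
      using v by auto
    then show "v \<in> h ` {q' \<in> {1..n}. blk I (h q') = blk I (h q) \<and> q' < q}"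
      by (rule rev_image_eqI)
  qed
  moreover have "inj_on h {q' \<in> {1..n}. blk I (h q') = blk I (h q) \<and> q' < q}"
    using Sn_inj[OF h] by (simp add: inj_on_def)
  ultimately show ?thesis using card_image by fastforce
qed

lemma gt_card_eq:
  fixes x y :: nat
  assumes fin: "finite A" and x: "x \<in> A" and y: "y \<in> A"
    and c: "card {v \<in> A. x < v} = card {v \<in> A. y < v}"
  shows "x = y"
proof (rule ccontr)
  have gen: False if xy: "x < y" and xA: "x \<in> A" and yA: "y \<in> A"
    and c: "card {v \<in> A. x < v} = card {v \<in> A. y < v}" for x y
  proof -
    have "{v \<in> A. y < v} \<subset> {v \<in> A. x < v}" using xy yA by auto
    then have "card {v \<in> A. y < v} < card {v \<in> A. x < v}" by (rule psubset_card_mono[rotated]) (use fin in simp)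
    then show False using c by simp
  qed
  assume "x \<noteq> y"
  then consider "x < y" | "y < x" by arith
  then show False
  proof cases
    case 1 show False by (rule gen[OF 1 x y c])
  next
    case 2 show False by (rule gen[OF 2 y x c[symmetric]])
  qed
qed

lemma unique_CC:
  assumes f: "f \<in> CC n I J" and g: "g \<in> CC n I J" and u: "u \<in> W n I" and w: "w \<in> W n J"
    and gd: "g = u \<circ> f \<circ> w"
  shows "f = g"
proof -
  have fS: "f \<in> Sn n" and gS: "g \<in> Sn n" using f g by (auto simp: CC_def)
  have fI: "I \<subseteq> DesR n (inv f)" and fJ: "J \<subseteq> DesR n f" using f by (auto simp: CC_def DesL_def)
  have gI: "I \<subseteq> DesR n (inv g)" and gJ: "J \<subseteq> DesR n g" using g by (auto simp: CC_def DesL_def)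
  have wS: "w \<in> Sn n" using w by (simp add: W_def)
  have phi: "blk I (g p) = blk I (f p)" if p: "p \<in> {1..n}" for p
  proof -
    define K where "K = {q \<in> {1..n}. blk J q = blk J p}"
    have finK: "finite K" unfolding K_def by simp
    have wK: "w ` K \<subseteq> K" using w Sn_range[OF wS] unfolding K_def W_def by auto
    have iK: "inj_on w K" using Sn_inj[OF wS] by (auto simp: inj_on_def)
    have bK: "bij_betw w K K" using endo_inj_surj[OF finK wK iK] iK by (simp add: bij_betw_def)
    show ?thesis
    proof (rule antitone_perm_eq[OF finK bK, of "\<lambda>q. blk I (g q)" "\<lambda>q. blk I (f q)"])
      fix q assume q: "q \<in> K"
      have "f (w q) \<in> {1..n}" using q Sn_range[OF fS Sn_range[OF wS]] unfolding K_def by auto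
      then show "blk I (g q) = blk I (f (w q))" using u gd by (simp add: W_def)
    next
      fix p1 p2 assume "p1 \<in> K" "p2 \<in> K" "p1 < p2"
      then have "f p2 < f p1" using DesR_blk[OF fJ] unfolding K_def by auto
      moreover have "1 \<le> f p2" using Sn_range[OF fS] \<open>p2 \<in> K\<close> unfolding K_def by auto
      ultimately show "blk I (f p2) \<le> blk I (f p1)" by (intro blk_mono) auto
    next
      fix p1 p2 assume "p1 \<in> K" "p2 \<in> K" "p1 < p2"
      then have "g p2 < g p1" using DesR_blk[OF gJ] unfolding K_def by auto
      moreover have "1 \<le> g p2" using Sn_range[OF gS] \<open>p2 \<in> K\<close> unfolding K_def by auto
      ultimately show "blk I (g p2) \<le> blk I (g p1)" by (intro blk_mono) auto
    next
      show "p \<in> K" using p unfolding K_def by simp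
    qed
  qed
  show ?thesis
  proof
    fix q show "f q = g q"
    proof (cases "q \<in> {1..n}")
      case False then show ?thesis using Sn_out[OF fS] Sn_out[OF gS] by simp
    next
      case True
      have a: "blk I (g q) = blk I (f q)" by (rule phi[OF True])
      have Q: "{q' \<in> {1..n}. blk I (g q') = blk I (g q) \<and> q' < q}
             = {q' \<in> {1..n}. blk I (f q') = blk I (f q) \<and> q' < q}" using phi a by auto
      define A where "A = {v \<in> {1..n}. blk I v = blk I (f q)}"
      have cA: "card {v \<in> A. f q < v} = card {v \<in> A. g q < v}"
        unfolding A_def using count_gt[OF fS fI True] count_gt[OF gS gI True] Q a by simp
      have fA: "f q \<in> A" unfolding A_def using Sn_range[OF fS True] by simp
      have gA: "g q \<in> A" unfolding A_def using Sn_range[OF gS True] a by simp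
      have finA: "finite A" unfolding A_def by simp
      show ?thesis by (rule gt_card_eq[OF finA fA gA cA])
    qed
  qed
qed

lemma card_CC_DC:
  assumes I: "I \<subseteq> gens n" and J: "J \<subseteq> gens n"
  shows "card (CC n I J) = card (DC n I J ` Sn n)"
proof -
  have "inj_on (DC n I J) (CC n I J)"
  proof (rule inj_onI)
    fix f g assume f: "f \<in> CC n I J" and g: "g \<in> CC n I J" and e: "DC n I J f = DC n I J g"
    then have "g \<in> DC n I J f" using DC_self by metis
    then obtain u w where "u \<in> W n I" "w \<in> W n J" "g = u \<circ> f \<circ> w" by (auto simp: DC_def)
    then show "f = g" using unique_CC[OF f g] by blast
  qed
  moreover have "DC n I J ` CC n I J = DC n I J ` Sn n"
  proof (intro set_eqI iffI)
    fix E assume "E \<in> DC n I J ` CC n I J" then show "E \<in> DC n I J ` Sn n" by (auto simp: CC_def)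
  next
    fix E assume "E \<in> DC n I J ` Sn n"
    then obtain x where x: "x \<in> Sn n" "E = DC n I J x" by auto
    obtain f where "f \<in> DC n I J x" "f \<in> CC n I J" using DC_has_CC[OF x(1) I J] by blast
    then show "E \<in> DC n I J ` CC n I J" using DC_mem_eq x(2) by blast
  qed
  ultimately show ?thesis by (metis card_image)
qed


lemma conj_W1:
  assumes c: "c \<in> Sn n"
    and hc: "\<And>p q. p \<in> {1..n} \<Longrightarrow> q \<in> {1..n} \<Longrightarrow> blk J' (c p) = blk J' (c q) \<longleftrightarrow> blk J p = blk J q"
    and w: "w \<in> W n J"
  shows "c \<circ> w \<circ> inv c \<in> W n J'"
proof -
  have wS: "w \<in> Sn n" using w by (simp add: W_def)
  have S: "c \<circ> w \<circ> inv c \<in> Sn n" by (rule Sn_comp[OF Sn_comp[OF c wS] inv_Sn[OF c]])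
  have "blk J' (c (w (inv c q))) = blk J' q" if q: "q \<in> {1..n}" for q
  proof -
    have p: "inv c q \<in> {1..n}" by (rule Sn_range[OF inv_Sn[OF c] q])
    have wp: "w (inv c q) \<in> {1..n}" by (rule Sn_range[OF wS p])
    have "blk J (w (inv c q)) = blk J (inv c q)" using w p by (simp add: W_def)
    then have "blk J' (c (w (inv c q))) = blk J' (c (inv c q))" using hc[OF wp p] by simp
    then show ?thesis using inv_Sn_simps(1)[OF c] by simp
  qed
  then show ?thesis using S by (simp add: W_def)
qed

lemma conj_W2:
  assumes c: "c \<in> Sn n"
    and hc: "\<And>p q. p \<in> {1..n} \<Longrightarrow> q \<in> {1..n} \<Longrightarrow> blk J' (c p) = blk J' (c q) \<longleftrightarrow> blk J p = blk J q"
    and w: "w \<in> W n J'"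
  shows "inv c \<circ> w \<circ> c \<in> W n J"
proof -
  have wS: "w \<in> Sn n" using w by (simp add: W_def)
  have S: "inv c \<circ> w \<circ> c \<in> Sn n" by (rule Sn_comp[OF Sn_comp[OF inv_Sn[OF c] wS] c])
  have "blk J (inv c (w (c p))) = blk J p" if p: "p \<in> {1..n}" for p
  proof -
    have cp: "c p \<in> {1..n}" by (rule Sn_range[OF c p])
    have wcp: "w (c p) \<in> {1..n}" by (rule Sn_range[OF wS cp])
    have r: "inv c (w (c p)) \<in> {1..n}" by (rule Sn_range[OF inv_Sn[OF c] wcp])
    have "blk J' (w (c p)) = blk J' (c p)" using w cp by (simp add: W_def)
    then have "blk J' (c (inv c (w (c p)))) = blk J' (c p)" using inv_Sn_simps(1)[OF c] by simp
    then show ?thesis using hc[OF r p] by simp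
  qed
  then show ?thesis using S by (simp add: W_def)
qed

lemma DC_conj:
  assumes c: "c \<in> Sn n"
    and hc: "\<And>p q. p \<in> {1..n} \<Longrightarrow> q \<in> {1..n} \<Longrightarrow> blk J' (c p) = blk J' (c q) \<longleftrightarrow> blk J p = blk J q"
  shows "DC n I J' (x \<circ> inv c) = (\<lambda>y. y \<circ> inv c) ` DC n I J x"
proof (intro set_eqI iffI)
  fix z assume "z \<in> DC n I J' (x \<circ> inv c)"
  then obtain u w where u: "u \<in> W n I" and w: "w \<in> W n J'" and z: "z = u \<circ> (x \<circ> inv c) \<circ> w"
    by (auto simp: DC_def)
  have "z = (u \<circ> x \<circ> (inv c \<circ> w \<circ> c)) \<circ> inv c"
    unfolding z by (simp add: fun_eq_iff inv_Sn_simps[OF c])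
  moreover have "u \<circ> x \<circ> (inv c \<circ> w \<circ> c) \<in> DC n I J x"
    unfolding DC_def using u conj_W2[OF c hc w] by blast
  ultimately show "z \<in> (\<lambda>y. y \<circ> inv c) ` DC n I J x" by blast
next
  fix z assume "z \<in> (\<lambda>y. y \<circ> inv c) ` DC n I J x"
  then obtain u w where u: "u \<in> W n I" and w: "w \<in> W n J" and z: "z = (u \<circ> x \<circ> w) \<circ> inv c"
    by (auto simp: DC_def)
  have "z = u \<circ> (x \<circ> inv c) \<circ> (c \<circ> w \<circ> inv c)"
    unfolding z by (simp add: fun_eq_iff inv_Sn_simps[OF c])
  then show "z \<in> DC n I J' (x \<circ> inv c)"
    unfolding DC_def using u conj_W1[OF c hc w] by blast
qed

lemma card_DC_conj:
  assumes c: "c \<in> Sn n"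
    and hc: "\<And>p q. p \<in> {1..n} \<Longrightarrow> q \<in> {1..n} \<Longrightarrow> blk J' (c p) = blk J' (c q) \<longleftrightarrow> blk J p = blk J q"
  shows "card (DC n I J ` Sn n) = card (DC n I J' ` Sn n)"
proof -
  define \<Psi> where "\<Psi> E = (\<lambda>y. y \<circ> inv c) ` E" for E :: "(nat \<Rightarrow> nat) set"
  have ir: "inj (\<lambda>y::nat \<Rightarrow> nat. y \<circ> inv c)"
  proof (rule injI)
    fix y y' :: "nat \<Rightarrow> nat" assume "y \<circ> inv c = y' \<circ> inv c"
    then have "y \<circ> inv c \<circ> c = y' \<circ> inv c \<circ> c" by simp
    then show "y = y'" by (simp add: fun_eq_iff inv_Sn_simps[OF c])
  qed
  have "inj_on \<Psi> X" for X unfolding \<Psi>_def using inj_image_eq_iff[OF ir] by (auto simp: inj_on_def)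
  moreover have "\<Psi> ` (DC n I J ` Sn n) = DC n I J' ` Sn n"
  proof (intro set_eqI iffI)
    fix E assume "E \<in> \<Psi> ` (DC n I J ` Sn n)"
    then obtain x where x: "x \<in> Sn n" "E = \<Psi> (DC n I J x)" by auto
    then have "E = DC n I J' (x \<circ> inv c)" unfolding \<Psi>_def using DC_conj[OF c hc] by simp
    moreover have "x \<circ> inv c \<in> Sn n" by (rule Sn_comp[OF x(1) inv_Sn[OF c]])
    ultimately show "E \<in> DC n I J' ` Sn n" by blast
  next
    fix E assume "E \<in> DC n I J' ` Sn n"
    then obtain x where x: "x \<in> Sn n" "E = DC n I J' x" by auto
    have xc: "x \<circ> c \<in> Sn n" by (rule Sn_comp[OF x(1) c])
    have "x \<circ> c \<circ> inv c = x" by (simp add: fun_eq_iff inv_Sn_simps[OF c])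
    then have "E = \<Psi> (DC n I J (x \<circ> c))" unfolding \<Psi>_def using DC_conj[OF c hc, of I "x \<circ> c"] x(2) by simp
    then show "E \<in> \<Psi> ` (DC n I J ` Sn n)" using xc by blast
  qed
  ultimately show ?thesis by (metis card_image)
qed

lemma DesL_inv: "f \<in> Sn n \<Longrightarrow> DesL n (inv f) = DesR n f"
  by (simp add: DesL_def Sn_def inv_inv_eq permutes_bij)

lemma CC_inv: "f \<in> CC n I J \<Longrightarrow> inv f \<in> CC n J I"
  unfolding CC_def using DesL_inv[of f n] inv_Sn[of f n] by (auto simp: DesL_def)

lemma inv_inv_Sn: "f \<in> Sn n \<Longrightarrow> inv (inv f) = f"
  unfolding Sn_def by (simp add: inv_inv_eq permutes_bij)

lemma CC_Sn: "f \<in> CC n I J \<Longrightarrow> f \<in> Sn n"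
  by (simp add: CC_def)

lemma card_CC_sym: "card (CC n I J) = card (CC n J I)"
proof -
  have "inj_on inv (CC n I J)"
  proof (rule inj_onI)
    fix f g assume "f \<in> CC n I J" "g \<in> CC n I J" "inv f = inv g"
    then show "f = g" using inv_inv_Sn[OF CC_Sn[of f]] inv_inv_Sn[OF CC_Sn[of g]] by metis
  qed
  moreover have "inv ` CC n I J = CC n J I"
  proof (intro set_eqI iffI)
    fix g assume "g \<in> inv ` CC n I J" then show "g \<in> CC n J I" using CC_inv by blast
  next
    fix g assume g: "g \<in> CC n J I"
    then have "inv g \<in> CC n I J" by (rule CC_inv)
    moreover have "inv (inv g) = g" by (rule inv_inv_Sn[OF CC_Sn[OF g]])
    ultimately show "g \<in> inv ` CC n I J" by (metis image_eqI)
  qed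
  ultimately show ?thesis by (metis card_image)
qed


lemma part_bij:
  assumes "finite P" "\<forall>X\<in>P. finite X" "\<forall>X\<in>P. \<forall>Y\<in>P. X \<noteq> Y \<longrightarrow> X \<inter> Y = {}"
    "finite Q" "\<forall>X\<in>Q. finite X" "\<forall>X\<in>Q. \<forall>Y\<in>Q. X \<noteq> Y \<longrightarrow> X \<inter> Y = {}"
    "image_mset card (mset_set P) = image_mset card (mset_set Q)"
  shows "\<exists>c. bij_betw c (\<Union>P) (\<Union>Q) \<and> (\<forall>X\<in>P. c ` X \<in> Q)"
  using assms
proof (induction P arbitrary: Q rule: finite_induct)
  case empty
  then have "mset_set Q = {#}" by simp
  then have "Q = {}" using empty.prems(3) mset_set_empty_iff by auto
  then show ?case by (intro exI[of _ "\<lambda>x. undefined"]) (auto simp: bij_betw_def)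
next
  case (insert X P Q)
  have "card X \<in># image_mset card (mset_set Q)"
    using insert.prems(6) insert.hyps(1,2) by (metis image_mset_add_mset mset_set.insert union_single_eq_member)
  then obtain Y where Y: "Y \<in> Q" "card Y = card X" using insert.prems(3) by auto
  define Q' where "Q' = Q - {Y}"
  have mQ: "mset_set Q = add_mset Y (mset_set Q')" unfolding Q'_def
    using Y(1) insert.prems(3) by (simp add: mset_set.remove)
  have mP: "mset_set (insert X P) = add_mset X (mset_set P)"
    using insert.hyps by simp
  have eqm: "image_mset card (mset_set P) = image_mset card (mset_set Q')"
    using insert.prems(6) unfolding mQ mP using Y(2) by simp
  have fQ': "finite Q'" "\<forall>X\<in>Q'. finite X" "\<forall>X\<in>Q'. \<forall>Y\<in>Q'. X \<noteq> Y \<longrightarrow> X \<inter> Y = {}"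
    using insert.prems(3,4,5) unfolding Q'_def by auto
  obtain c' where c': "bij_betw c' (\<Union>P) (\<Union>Q')" "\<forall>Z\<in>P. c' ` Z \<in> Q'"
    using insert.IH[OF _ _ fQ' eqm] insert.prems(1,2) by auto
  have fX: "finite X" "finite Y" using insert.prems(1) Y(1) insert.prems(4) by auto
  obtain b where b: "bij_betw b X Y" using finite_same_card_bij[OF fX Y(2)[symmetric]] by auto
  define c where "c p = (if p \<in> X then b p else c' p)" for p
  have hd: "\<And>A B. A \<in> insert X P \<Longrightarrow> B \<in> insert X P \<Longrightarrow> A \<noteq> B \<Longrightarrow> A \<inter> B = {}"
    using insert.prems(2) by blast
  have dX: "X \<inter> \<Union>P = {}"
  proof -
    have "X \<inter> Z = {}" if Z: "Z \<in> P" for Z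
    proof -
      have "X \<noteq> Z" using insert.hyps(2) Z by auto
      then show ?thesis using hd[of X Z] Z by simp
    qed
    then show ?thesis by blast
  qed
  have dY: "Y \<inter> \<Union>Q' = {}" using insert.prems(5) Y(1) unfolding Q'_def by blast
  have b1: "bij_betw c X Y" using b unfolding c_def by (rule bij_betw_cong[THEN iffD1, rotated]) auto
  have b2: "bij_betw c (\<Union>P) (\<Union>Q')" using c'(1) unfolding c_def
    by (rule bij_betw_cong[THEN iffD1, rotated]) (use dX in auto)
  have "bij_betw c (X \<union> \<Union>P) (Y \<union> \<Union>Q')" by (rule bij_betw_combine[OF b1 b2 dY])
  moreover have "Y \<union> \<Union>Q' = \<Union>Q" using Y(1) unfolding Q'_def by blast
  moreover have "\<forall>Z\<in>insert X P. c ` Z \<in> Q"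
  proof
    fix Z assume "Z \<in> insert X P"
    then consider "Z = X" | "Z \<in> P" by auto
    then show "c ` Z \<in> Q"
    proof cases
      case 1 then have "c ` Z = Y" using b1 by (simp add: bij_betw_def)
      then show ?thesis using Y(1) by simp
    next
      case 2
      then have "Z \<inter> X = {}" using dX by blast
      then have "c ` Z = c' ` Z" unfolding c_def by auto
      then show ?thesis using c'(2) 2 unfolding Q'_def by auto
    qed
  qed
  ultimately show ?case by auto
qed


definition fib :: "nat \<Rightarrow> nat set \<Rightarrow> nat \<Rightarrow> nat set" where
  "fib n J p = {q \<in> {1..n}. blk J q = blk J p}"

definition Blocks :: "nat \<Rightarrow> nat set \<Rightarrow> nat set set" where
  "Blocks n J = fib n J ` {1..n}"

locale blocks_setup =
  fixes n :: nat and J :: "nat set"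
  assumes n1: "1 \<le> n" and Jg: "J \<subseteq> {1..n-1}"
begin

definition ps where "ps = sorted_list_of_set ({1..n} - J)"
definition k where "k = length ps"
definition lo where "lo b = (if b = 0 then 0 else ps ! (b - 1))"
definition Bl where "Bl b = {lo b<..ps ! b}"

lemma set_ps: "set ps = {1..n} - J"
  unfolding ps_def by simp

lemma dist_ps: "distinct ps"
  unfolding ps_def by simp

lemma sorted_ps: "sorted_wrt (<) ps"
  unfolding ps_def by (rule strict_sorted_list_of_set)

lemma ps_less: "i < j \<Longrightarrow> j < k \<Longrightarrow> ps ! i < ps ! j"
  using sorted_wrt_nth_less[OF sorted_ps] unfolding k_def by blast

lemma ps_le: "i \<le> j \<Longrightarrow> j < k \<Longrightarrow> ps ! i \<le> ps ! j"
  using ps_less by (cases "i = j") (auto simp: less_imp_le)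

lemma ps_in: "m < k \<Longrightarrow> ps ! m \<in> {1..n} - J"
  using set_ps nth_mem unfolding k_def by blast

lemma n_in: "n \<in> set ps"
  using set_ps n1 Jg by auto

lemma k_pos: "0 < k"
  using n_in unfolding k_def by (cases ps) auto

lemma last_ps: "ps ! (k - 1) = n"
proof -
  obtain j where j: "j < k" "ps ! j = n" using n_in unfolding k_def by (metis in_set_conv_nth)
  show ?thesis
  proof (rule ccontr)
    assume "ps ! (k - 1) \<noteq> n"
    then have "j < k - 1" using j by (cases "j = k - 1") auto
    then have "n < ps ! (k - 1)" using ps_less[of j "k - 1"] j k_pos by simp
    moreover have "ps ! (k - 1) \<le> n" using ps_in[of "k - 1"] k_pos by simp
    ultimately show False by simp
  qed
qed

lemma lo_less: "b < k \<Longrightarrow> lo b < ps ! b"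
  unfolding lo_def using ps_less[of "b - 1" b] ps_in[of b] by auto

lemma blk_Bl:
  assumes b: "b < k" and p: "p \<in> Bl b"
  shows "blk J p = b"
proof -
  have p1: "1 \<le> p" and pn: "p \<le> ps ! b" using p unfolding Bl_def by auto
  have "ps ! b \<le> n" using ps_in[OF b] by simp
  then have pn': "p \<le> n" using pn by simp
  have "{1..<p} - J = {x \<in> {1..n} - J. x < p}" using pn' by auto
  also have "\<dots> = (nth ps) ` {..<b}"
  proof (intro set_eqI iffI)
    fix x assume x: "x \<in> {x \<in> {1..n} - J. x < p}"
    then obtain m where m: "m < k" "x = ps ! m" using set_ps unfolding k_def by (metis (no_types, lifting) mem_Collect_eq in_set_conv_nth)
    have "m < b"
    proof (rule ccontr)
      assume "\<not> m < b"
      then have "ps ! b \<le> ps ! m" using ps_le m by simp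
      then show False using x m pn by simp
    qed
    then show "x \<in> (nth ps) ` {..<b}" using m by simp
  next
    fix x assume "x \<in> (nth ps) ` {..<b}"
    then obtain m where m: "m < b" "x = ps ! m" by auto
    have "ps ! m \<le> lo b" unfolding lo_def using ps_le[of m "b - 1"] m b by auto
    moreover have "lo b < p" using p unfolding Bl_def by simp
    ultimately show "x \<in> {x \<in> {1..n} - J. x < p}" using ps_in[of m] m b by simp
  qed
  finally have "{1..<p} - J = (nth ps) ` {..<b}" .
  moreover have "inj_on (nth ps) {..<b}" using inj_on_nth[OF dist_ps] b unfolding k_def by auto
  ultimately show ?thesis unfolding blk_def by (simp add: card_image)
qed

lemma Bl_sub: "b < k \<Longrightarrow> Bl b \<subseteq> {1..n}"
  using ps_in[of b] unfolding Bl_def by auto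

lemma in_some_Bl:
  assumes p: "p \<in> {1..n}"
  shows "\<exists>b<k. p \<in> Bl b"
proof -
  define b where "b = (LEAST m. m < k \<and> p \<le> ps ! m)"
  have ex: "k - 1 < k \<and> p \<le> ps ! (k - 1)" using last_ps k_pos p by simp
  have b: "b < k" "p \<le> ps ! b" using LeastI[of "\<lambda>m. m < k \<and> p \<le> ps ! m", OF ex] unfolding b_def by auto
  have "lo b < p"
  proof (cases "b = 0")
    case True then show ?thesis using p by (simp add: lo_def)
  next
    case False
    then have "\<not> (b - 1 < k \<and> p \<le> ps ! (b - 1))" using not_less_Least[of "b - 1" "\<lambda>m. m < k \<and> p \<le> ps ! m"]
      unfolding b_def by fastforce
    moreover have "b - 1 < k" using b by simp
    ultimately have "\<not> p \<le> ps ! (b - 1)" by simp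
    then show ?thesis using False by (simp add: lo_def)
  qed
  then show ?thesis using b unfolding Bl_def by auto
qed

lemma fib_Bl: "b < k \<Longrightarrow> {q \<in> {1..n}. blk J q = b} = Bl b"
proof (intro set_eqI iffI)
  fix q assume b: "b < k" and q: "q \<in> {q \<in> {1..n}. blk J q = b}"
  then obtain b' where b': "b' < k" "q \<in> Bl b'" using in_some_Bl by auto
  then have "blk J q = b'" by (rule blk_Bl)
  then show "q \<in> Bl b" using q b' by simp
next
  fix q assume b: "b < k" and q: "q \<in> Bl b"
  have "q \<in> {1..n}" using Bl_sub[OF b] q by blast
  then show "q \<in> {q \<in> {1..n}. blk J q = b}" using blk_Bl[OF b q] by simp
qed

lemma Blocks_eq: "Blocks n J = Bl ` {..<k}"
proof (intro set_eqI iffI)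
  fix X assume "X \<in> Blocks n J"
  then obtain p where p: "p \<in> {1..n}" "X = fib n J p" by (auto simp: Blocks_def)
  obtain b where b: "b < k" "p \<in> Bl b" using in_some_Bl[OF p(1)] by auto
  have "X = Bl b" using p(2) fib_Bl[OF b(1)] blk_Bl[OF b] unfolding fib_def by simp
  then show "X \<in> Bl ` {..<k}" using b by simp
next
  fix X assume "X \<in> Bl ` {..<k}"
  then obtain b where b: "b < k" "X = Bl b" by auto
  have pb: "ps ! b \<in> Bl b" using lo_less[OF b(1)] unfolding Bl_def by simp
  have "fib n J (ps ! b) = Bl b" using fib_Bl[OF b(1)] blk_Bl[OF b(1) pb] unfolding fib_def by simp
  moreover have "ps ! b \<in> {1..n}" using ps_in[OF b(1)] by simp
  ultimately show "X \<in> Blocks n J" using b unfolding Blocks_def by (metis image_eqI)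
qed

lemma inj_Bl: "inj_on Bl {..<k}"
proof (rule inj_onI)
  fix b b' assume b: "b \<in> {..<k}" and b': "b' \<in> {..<k}" and e: "Bl b = Bl b'"
  have pb: "ps ! b \<in> Bl b" using lo_less b unfolding Bl_def by simp
  then have "ps ! b \<in> Bl b'" using e by simp
  then show "b = b'" using blk_Bl[of b "ps ! b"] blk_Bl[of b' "ps ! b"] pb b b' by simp
qed

lemma card_Bl: "card (Bl b) = ps ! b - lo b"
  unfolding Bl_def by simp

lemma ncomp_eq: "ncomp n J = map (\<lambda>b. ps ! b - lo b) [0..<k]"
proof -
  obtain x xs where ps: "ps = x # xs" using k_pos unfolding k_def by (cases ps) auto
  show ?thesis
  proof (rule nth_equalityI)
    show "length (ncomp n J) = length (map (\<lambda>b. ps ! b - lo b) [0..<k])"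
      unfolding ncomp_def Let_def ps_def[symmetric] k_def using ps by simp
  next
    fix i assume i: "i < length (ncomp n J)"
    then have ik: "i < k" unfolding ncomp_def Let_def ps_def[symmetric] k_def using ps by simp
    show "ncomp n J ! i = map (\<lambda>b. ps ! b - lo b) [0..<k] ! i"
    proof (cases i)
      case 0 then show ?thesis unfolding ncomp_def Let_def ps_def[symmetric] using ps ik by (simp add: lo_def)
    next
      case (Suc j)
      have R: "map (\<lambda>b. ps ! b - lo b) [0..<k] ! i = ps ! i - lo i" using ik by (simp del: upt_Suc)
      have jx: "j < length xs" using ik Suc ps unfolding k_def by simp
      have L: "ncomp n J ! i = xs ! j - (x # xs) ! j"
        unfolding ncomp_def Let_def ps_def[symmetric] using ps Suc jx by (simp add: nth_zip)
      show ?thesis unfolding R L using Suc ps by (simp add: lo_def)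
    qed
  qed
qed

lemma mset_Blocks: "image_mset card (mset_set (Blocks n J)) = mset (ncomp n J)"
proof -
  have "image_mset card (mset_set (Blocks n J)) = image_mset card (image_mset Bl (mset_set {..<k}))"
    unfolding Blocks_eq using image_mset_mset_set[OF inj_Bl] by simp
  also have "\<dots> = image_mset (\<lambda>b. ps ! b - lo b) (mset_set {..<k})"
    by (simp add: multiset.map_comp comp_def card_Bl)
  also have "\<dots> = mset (ncomp n J)"
    unfolding ncomp_eq by (simp add: atLeast0LessThan)
  finally show ?thesis .
qed

end

lemma Blocks_props:
  shows "finite (Blocks n J)" "\<forall>X\<in>Blocks n J. finite X"
    "\<forall>X\<in>Blocks n J. \<forall>Y\<in>Blocks n J. X \<noteq> Y \<longrightarrow> X \<inter> Y = {}" "\<Union>(Blocks n J) = {1..n}"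
  by (auto simp: Blocks_def fib_def)

lemma exists_c:
  assumes n1: "1 \<le> n" and J: "J \<subseteq> {1..n-1}" and J': "J' \<subseteq> {1..n-1}"
    and m: "mset (ncomp n J) = mset (ncomp n J')"
  shows "\<exists>c \<in> Sn n. \<forall>p \<in> {1..n}. \<forall>q \<in> {1..n}. blk J' (c p) = blk J' (c q) \<longleftrightarrow> blk J p = blk J q"
proof -
  interpret A: blocks_setup n J using n1 J by unfold_locales
  interpret B: blocks_setup n J' using n1 J' by unfold_locales
  have "image_mset card (mset_set (Blocks n J)) = image_mset card (mset_set (Blocks n J'))"
    using A.mset_Blocks B.mset_Blocks m by simp
  from part_bij[OF Blocks_props(1-3) Blocks_props(1-3) this]
  obtain c0 where c0: "bij_betw c0 {1..n} {1..n}" "\<forall>X\<in>Blocks n J. c0 ` X \<in> Blocks n J'"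
    using Blocks_props(4) by metis
  define c where "c p = (if p \<in> {1..n} then c0 p else p)" for p
  have cb: "bij_betw c {1..n} {1..n}" using c0(1) unfolding c_def
    by (rule bij_betw_cong[THEN iffD1, rotated]) auto
  have cS: "c \<in> Sn n" unfolding Sn_def mem_Collect_eq by (rule bij_imp_permutes[OF cb]) (auto simp: c_def)
  have img: "c ` fib n J p = fib n J' (c p)" if p: "p \<in> {1..n}" for p
  proof -
    have "c ` fib n J p = c0 ` fib n J p" unfolding c_def fib_def by auto
    moreover have "c0 ` fib n J p \<in> Blocks n J'" using c0(2) p unfolding Blocks_def by auto
    ultimately obtain r where r: "r \<in> {1..n}" "c ` fib n J p = fib n J' r" unfolding Blocks_def by auto
    have "p \<in> fib n J p" using p by (simp add: fib_def)
    then have "c p \<in> fib n J' r" using r by blast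
    then have "blk J' (c p) = blk J' r" by (simp add: fib_def)
    then have "fib n J' r = fib n J' (c p)" unfolding fib_def by simp
    then show ?thesis using r by simp
  qed
  have "blk J' (c p) = blk J' (c q) \<longleftrightarrow> blk J p = blk J q" if p: "p \<in> {1..n}" and q: "q \<in> {1..n}" for p q
  proof
    assume e: "blk J' (c p) = blk J' (c q)"
    have "c q \<in> fib n J' (c p)" using e Sn_range[OF cS q] by (simp add: fib_def)
    then obtain r where r: "r \<in> fib n J p" "c r = c q" using img[OF p] by (metis imageE)
    have "r = q" using r(2) Sn_inj[OF cS] by simp
    then show "blk J p = blk J q" using r(1) by (simp add: fib_def)
  next
    assume e: "blk J p = blk J q"
    then have "q \<in> fib n J p" using q by (simp add: fib_def)
    then have "c q \<in> fib n J' (c p)" using img[OF p] by blast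
    then show "blk J' (c p) = blk J' (c q)" by (simp add: fib_def)
  qed
  then show ?thesis using cS by blast
qed


lemma gens_eq: "gens n = {1..n-1}"
  by (simp add: gens_def)

lemma CC_J_inv:
  assumes n1: "1 \<le> n" and I: "I \<subseteq> {1..n-1}" and J: "J \<subseteq> {1..n-1}" and J': "J' \<subseteq> {1..n-1}"
    and m: "npart n J = npart n J'"
  shows "card (CC n I J) = card (CC n I J')"
proof -
  have "mset (ncomp n J) = mset (ncomp n J')"
    using arg_cong[OF m, of mset] by (simp add: npart_def)
  then obtain c where c: "c \<in> Sn n"
    and hc: "\<forall>p \<in> {1..n}. \<forall>q \<in> {1..n}. blk J' (c p) = blk J' (c q) \<longleftrightarrow> blk J p = blk J q"
    using exists_c[OF n1 J J'] by blast
  have "card (CC n I J) = card (DC n I J ` Sn n)" using card_CC_DC I J by (simp add: gens_eq)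
  also have "\<dots> = card (DC n I J' ` Sn n)" by (rule card_DC_conj[OF c]) (use hc in blast)
  also have "\<dots> = card (CC n I J')" using card_CC_DC I J' by (simp add: gens_eq)
  finally show ?thesis .
qed

lemma ahat_CC: "ahat n I J = card (CC n I J)"
  unfolding ahat_def CC_def using transfer[of n "\<lambda>L R. I \<subseteq> L \<and> J \<subseteq> R"] by simp

definition gg :: "nat \<Rightarrow> nat set \<Rightarrow> nat set \<Rightarrow> nat" where
  "gg n K J = card {f \<in> Sn n. DesL n f = K \<and> J \<subseteq> DesR n f}"

lemma a_count_gg: "a_count n I J = gg n I J"
  unfolding a_count_def gg_def using transfer[of n "\<lambda>L R. L = I \<and> J \<subseteq> R"] by simp

lemma DesL_sub: "DesL n f \<subseteq> gens n"
  by (auto simp: DesL_def DesR_def)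

lemma CC_sum:
  assumes K: "K \<subseteq> gens n"
  shows "card (CC n K J) = (\<Sum>K' \<in> {K'. K \<subseteq> K' \<and> K' \<subseteq> gens n}. gg n K' J)"
proof -
  have "CC n K J = (\<Union>K' \<in> {K'. K \<subseteq> K' \<and> K' \<subseteq> gens n}. {f \<in> Sn n. DesL n f = K' \<and> J \<subseteq> DesR n f})"
    using DesL_sub by (auto simp: CC_def)
  moreover have "finite {K'. K \<subseteq> K' \<and> K' \<subseteq> gens n}"
    by (rule finite_subset[of _ "Pow (gens n)"]) (auto simp: gens_def)
  ultimately show ?thesis unfolding gg_def
    by (simp, intro card_UN_disjoint) (auto intro: finite_subset[OF _ finite_Sn])
qed

lemma gg_inv:
  assumes hyp: "\<And>K. K \<subseteq> gens n \<Longrightarrow> card (CC n K J) = card (CC n K J')"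
  shows "K \<subseteq> gens n \<Longrightarrow> gg n K J = gg n K J'"
proof (induction "card (gens n - K)" arbitrary: K rule: less_induct)
  case less
  let ?S = "{K'. K \<subseteq> K' \<and> K' \<subseteq> gens n}"
  have fin: "finite ?S" by (rule finite_subset[of _ "Pow (gens n)"]) (auto simp: gens_def)
  have KS: "K \<in> ?S" using less.prems by simp
  have IH: "gg n K' J = gg n K' J'" if "K' \<in> ?S - {K}" for K'
  proof (rule less.hyps)
    have "gens n - K' \<subset> gens n - K" using that by auto
    then show "card (gens n - K') < card (gens n - K)" by (rule psubset_card_mono[rotated]) (simp add: gens_def)
    show "K' \<subseteq> gens n" using that by simp
  qed
  have "card (CC n K J) = gg n K J + (\<Sum>K' \<in> ?S - {K}. gg n K' J)"
    using CC_sum[OF less.prems] sum.remove[OF fin KS] by simp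
  moreover have "card (CC n K J') = gg n K J' + (\<Sum>K' \<in> ?S - {K}. gg n K' J')"
    using CC_sum[OF less.prems] sum.remove[OF fin KS] by simp
  moreover have "(\<Sum>K' \<in> ?S - {K}. gg n K' J) = (\<Sum>K' \<in> ?S - {K}. gg n K' J')"
    by (rule sum.cong) (use IH in auto)
  ultimately show ?case using hyp[OF less.prems] by simp
qed

theorem corollary3p5:
  fixes n :: nat
  assumes "n \<ge> 1"
  shows "(\<forall>I J I' J'. I \<subseteq> {1..n-1} \<and> J \<subseteq> {1..n-1} \<and> I' \<subseteq> {1..n-1} \<and> J' \<subseteq> {1..n-1}
            \<and> npart n I = npart n I' \<and> npart n J = npart n J'
            \<longrightarrow> ahat n I J = ahat n I' J')
       \<and> (\<forall>I J J'. I \<subseteq> {1..n-1} \<and> J \<subseteq> {1..n-1} \<and> J' \<subseteq> {1..n-1}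
            \<and> npart n J = npart n J'
            \<longrightarrow> a_count n I J = a_count n I J')"
proof (intro conjI allI impI)
  fix I J I' J'
  assume h: "I \<subseteq> {1..n-1} \<and> J \<subseteq> {1..n-1} \<and> I' \<subseteq> {1..n-1} \<and> J' \<subseteq> {1..n-1}
            \<and> npart n I = npart n I' \<and> npart n J = npart n J'"
  have "ahat n I J = card (CC n I J)" by (rule ahat_CC)
  also have "\<dots> = card (CC n I J')" using CC_J_inv[OF assms] h by blast
  also have "\<dots> = card (CC n J' I)" by (rule card_CC_sym)
  also have "\<dots> = card (CC n J' I')" using CC_J_inv[OF assms] h by blast
  also have "\<dots> = card (CC n I' J')" by (rule card_CC_sym)
  also have "\<dots> = ahat n I' J'" by (rule ahat_CC[symmetric])
  finally show "ahat n I J = ahat n I' J'" .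
next
  fix I J J'
  assume h: "I \<subseteq> {1..n-1} \<and> J \<subseteq> {1..n-1} \<and> J' \<subseteq> {1..n-1} \<and> npart n J = npart n J'"
  have "gg n I J = gg n I J'"
  proof (rule gg_inv)
    fix K assume "K \<subseteq> gens n"
    then show "card (CC n K J) = card (CC n K J')" using CC_J_inv[OF assms] h by (simp add: gens_eq)
  next
    show "I \<subseteq> gens n" using h by (simp add: gens_eq)
  qed
  then show "a_count n I J = a_count n I J'" by (simp add: a_count_gg)
qed


end
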